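(* Let $G$ be a graph on $[n]$ that is upper crossing closed with respect to a total order $\unlhd$ on $E(G)$. Then for every $H\in NC_G$, $$\mu(H)=(-1)^{n-cc(H)}\,\mathrm{ncnbc}_{n-cc(H)}(H).$$ Moreover, if $NC_G$ is graded, then $$\chi(NC_G,t)=\sum_{k\ge 0}(-1)^k\,\mathrm{ncnbc}_k(G)\,t^{\rho(NC_G)-k}.$$
   Context: All graphs are finite simple graphs with vertex set $[n]=\{1,\dots,n\}$; edges are written $ij$ with $i<j$. Two edges $a_1a_2$ and $b_1b_2$ cross if $a_1<b_1<a_2<b_2$ or $b_1<a_1<b_2<a_2$. A spanning subgraph is identified with its edge set. A bond of $G$ is a spanning subgraph each of whose connected components is an induced subgraph of $G$; for a bond $H$, $\pi(H)$ is the partition of $[n]$ into the vertex sets of its components, and $cc(H)$ is its number of connected components. A set partition is crossing if there are distinct blocks $B,B'$ and $a,c\in B$, $b,d\in B'$ with $a<b<c<d$, noncrossing otherwise; $H$ is noncrossing if $\pi(H)$ is. $NC_G$ is the poset of noncrossing bonds ordered by inclusion of edge sets; its minimum is the empty bond $\hat0$. Two crossing edges $e,f$ are crossing closed if among all induced connected subgraphs of $G$ containing $e$ and $f$ there is a unique minimal one (under containment), denoted $J(e,f)$; $G$ is crossing closed if all pairs of crossing edges are. $G$ is upper crossing closed with respect to a total order $\unlhd$ on $E(G)$ if $G$ is crossing closed and for every pair of crossing edges $e,f$, $J(e,f)$ contains an edge $h$ with $h\lhd e$ and $h\lhd f$. Given a total order on the edges of a graph $X$, a broken circuit is the edge set of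 a cycle of $X$ with its smallest edge removed; an NBC set is a set of edges containing no broken circuit; a noncrossing NBC set is an NBC set no two of whose edges cross. $\mathrm{ncnbc}_k(X)$ is the number of noncrossing NBC sets of $X$ of size $k$ (for $H\in NC_G$, using the restriction of $\unlhd$ to $E(H)$). The Möbius function is $\mu(\hat0)=1$ and $\mu(x)=-\sum_{y<x}\mu(y)$ for $x\neq\hat0$. For graded $P$ with rank function $\rho$ and $\hat0$, $\chi(P,t)=\sum_{x\in P}\mu(x)t^{\rho(P)-\rho(x)}$, where $\rho(P)$ is the rank of $P$. *)

theory Defs
  imports Complex_Main
begin

(* Vertices are natural numbers in [n] = {1..n}; an edge ij (i<j) is the pair (i,j). *)
type_synonym edge = "nat \<times> nat"

definition graph_on :: "nat \<Rightarrow> edge set \<Rightarrow> bool" where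
  "graph_on n E \<longleftrightarrow> (\<forall>(i,j)\<in>E. 1 \<le> i \<and> i < j \<and> j \<le> n)"

definition mk_edge :: "nat \<Rightarrow> nat \<Rightarrow> edge" where
  "mk_edge u v = (min u v, max u v)"

definition crosses :: "edge \<Rightarrow> edge \<Rightarrow> bool" where
  "crosses e f \<longleftrightarrow>
     (fst e < fst f \<and> fst f < snd e \<and> snd e < snd f) \<or>
     (fst f < fst e \<and> fst e < snd f \<and> snd f < snd e)"

definition adjrel :: "edge set \<Rightarrow> (nat \<times> nat) set" where
  "adjrel H = {(u,v). (u,v) \<in> H \<or> (v,u) \<in> H}"

definition induced_edges :: "edge set \<Rightarrow> nat set \<Rightarrow> edge set" where
  "induced_edges E S = {(i,j) \<in> E. i \<in> S \<and> j \<in> S}"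

definition connected_on :: "edge set \<Rightarrow> nat set \<Rightarrow> bool" where
  "connected_on E S \<longleftrightarrow> (\<forall>u\<in>S. \<forall>v\<in>S. (u,v) \<in> (adjrel (induced_edges E S))\<^sup>*)"

definition blocks :: "nat \<Rightarrow> edge set \<Rightarrow> nat set set" where
  "blocks n H = {1..n} // ((adjrel H)\<^sup>*)"

definition cc :: "nat \<Rightarrow> edge set \<Rightarrow> nat" where
  "cc n H = card (blocks n H)"

definition is_bond :: "nat \<Rightarrow> edge set \<Rightarrow> edge set \<Rightarrow> bool" where
  "is_bond n E H \<longleftrightarrow> H \<subseteq> E \<and>
     (\<forall>C\<in>blocks n H. induced_edges H C = induced_edges E C)"

definition crossing_partition :: "nat set set \<Rightarrow> bool" where
  "crossing_partition P \<longleftrightarrow>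
     (\<exists>B\<in>P. \<exists>B'\<in>P. B \<noteq> B' \<and>
        (\<exists>a\<in>B. \<exists>c\<in>B. \<exists>b\<in>B'. \<exists>d\<in>B'. a < b \<and> b < c \<and> c < d))"

definition noncrossing_bond :: "nat \<Rightarrow> edge set \<Rightarrow> edge set \<Rightarrow> bool" where
  "noncrossing_bond n E H \<longleftrightarrow> is_bond n E H \<and> \<not> crossing_partition (blocks n H)"

(* NC_G, as a set of edge sets, ordered by inclusion *)
definition NC :: "nat \<Rightarrow> edge set \<Rightarrow> edge set set" where
  "NC n E = {H. noncrossing_bond n E H}"

definition J_candidates :: "nat \<Rightarrow> edge set \<Rightarrow> edge \<Rightarrow> edge \<Rightarrow> nat set set" where
  "J_candidates n E e f =
     {S. S \<subseteq> {1..n} \<and> connected_on E S \<and> e \<in> induced_edges E S \<and> f \<in> induced_edges E S}"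

definition is_minimal_J :: "nat \<Rightarrow> edge set \<Rightarrow> edge \<Rightarrow> edge \<Rightarrow> nat set \<Rightarrow> bool" where
  "is_minimal_J n E e f S \<longleftrightarrow> S \<in> J_candidates n E e f \<and>
     (\<forall>S'\<in>J_candidates n E e f. S' \<subseteq> S \<longrightarrow> S' = S)"

definition crossing_closed_pair :: "nat \<Rightarrow> edge set \<Rightarrow> edge \<Rightarrow> edge \<Rightarrow> bool" where
  "crossing_closed_pair n E e f \<longleftrightarrow> (\<exists>!S. is_minimal_J n E e f S)"

definition J_edges :: "nat \<Rightarrow> edge set \<Rightarrow> edge \<Rightarrow> edge \<Rightarrow> edge set" where
  "J_edges n E e f = induced_edges E (THE S. is_minimal_J n E e f S)"

definition crossing_closed :: "nat \<Rightarrow> edge set \<Rightarrow> bool" where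
  "crossing_closed n E \<longleftrightarrow>
     (\<forall>e\<in>E. \<forall>f\<in>E. crosses e f \<longrightarrow> crossing_closed_pair n E e f)"

(* total order r on E (reflexive relation, as in linear_order_on); h \<lhd> e means (h,e) \<in> r, h \<noteq> e *)
definition upper_crossing_closed :: "nat \<Rightarrow> edge set \<Rightarrow> (edge \<times> edge) set \<Rightarrow> bool" where
  "upper_crossing_closed n E r \<longleftrightarrow> crossing_closed n E \<and>
     (\<forall>e\<in>E. \<forall>f\<in>E. crosses e f \<longrightarrow>
        (\<exists>h\<in>J_edges n E e f. (h,e) \<in> r \<and> h \<noteq> e \<and> (h,f) \<in> r \<and> h \<noteq> f))"

definition cycle_sets :: "edge set \<Rightarrow> edge set set" where
  "cycle_sets X = {C. \<exists>vs. length vs \<ge> 3 \<and> distinct vs \<and>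
       C = {mk_edge (vs ! i) (vs ! ((i + 1) mod length vs)) | i. i < length vs} \<and> C \<subseteq> X}"

definition min_edge :: "(edge \<times> edge) set \<Rightarrow> edge set \<Rightarrow> edge" where
  "min_edge r C = (THE e. e \<in> C \<and> (\<forall>c\<in>C. (e,c) \<in> r))"

definition broken_circuits :: "(edge \<times> edge) set \<Rightarrow> edge set \<Rightarrow> edge set set" where
  "broken_circuits r X = {C - {min_edge r C} | C. C \<in> cycle_sets X}"

definition is_nbc :: "(edge \<times> edge) set \<Rightarrow> edge set \<Rightarrow> edge set \<Rightarrow> bool" where
  "is_nbc r X S \<longleftrightarrow> S \<subseteq> X \<and> (\<forall>B\<in>broken_circuits r X. \<not> B \<subseteq> S)"

definition is_ncnbc :: "(edge \<times> edge) set \<Rightarrow> edge set \<Rightarrow> edge set \<Rightarrow> bool" where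
  "is_ncnbc r X S \<longleftrightarrow> is_nbc r X S \<and> (\<forall>e\<in>S. \<forall>f\<in>S. \<not> crosses e f)"

definition ncnbc :: "(edge \<times> edge) set \<Rightarrow> edge set \<Rightarrow> nat \<Rightarrow> nat" where
  "ncnbc r X k = card {S. is_ncnbc r X S \<and> card S = k}"

(* Moebius function of a poset P of finite sets ordered by inclusion, with minimum {} *)
function mobius :: "'a set set \<Rightarrow> 'a set \<Rightarrow> int" where
  "mobius P x = (if x = {} then 1 else if infinite x then 0
                 else - (\<Sum>y\<in>{y\<in>P. y \<subset> x}. mobius P y))"
  by pat_completeness auto
termination
  by (relation "measure (\<lambda>(P,x). card x)") (auto intro: psubset_card_mono)

definition covers :: "'a set set \<Rightarrow> 'a set \<Rightarrow> 'a set \<Rightarrow> bool" where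
  "covers P x y \<longleftrightarrow> x \<in> P \<and> y \<in> P \<and> x \<subset> y \<and> \<not> (\<exists>z\<in>P. x \<subset> z \<and> z \<subset> y)"

(* P (with minimum {}) is graded with rank function rho and rank rk:
   rho {} = 0, rho increases by one along covers, and all maximal elements have rank rk
   (equivalently: all maximal chains have length rk). *)
definition graded_rank :: "'a set set \<Rightarrow> ('a set \<Rightarrow> nat) \<Rightarrow> nat \<Rightarrow> bool" where
  "graded_rank P rho rk \<longleftrightarrow> {} \<in> P \<and> rho {} = 0 \<and>
     (\<forall>x y. covers P x y \<longrightarrow> rho y = rho x + 1) \<and>
     (\<forall>x\<in>P. (\<not> (\<exists>y\<in>P. x \<subset> y)) \<longrightarrow> rho x = rk)"

definition char_poly :: "'a set set \<Rightarrow> ('a set \<Rightarrow> nat) \<Rightarrow> nat \<Rightarrow> real \<Rightarrow> real" where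
  "char_poly P rho rk t = (\<Sum>x\<in>P. of_int (mobius P x) * t ^ (rk - rho x))"

end

theory Submission
  imports Defs "HOL-Library.Transitive_Closure_Table"
begin

abbreviation RR :: "edge set \<Rightarrow> (nat \<times> nat) set" where
  "RR H \<equiv> (adjrel H)\<^sup>*"

lemma adjrel_iff: "(x,y) \<in> adjrel H \<longleftrightarrow> (x,y) \<in> H \<or> (y,x) \<in> H"
  by (simp add: adjrel_def)

lemma adjrel_sym: "sym (adjrel H)"
  by (auto simp: sym_def adjrel_def)

lemma RR_sym: "(x,y) \<in> RR H \<Longrightarrow> (y,x) \<in> RR H"
  by (meson adjrel_sym sym_def sym_rtrancl)

lemma RR_trans: "(x,y) \<in> RR H \<Longrightarrow> (y,z) \<in> RR H \<Longrightarrow> (x,z) \<in> RR H"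
  by (rule rtrancl_trans)

lemma equiv_RR: "equiv UNIV (RR H)"
  by (simp add: equivI refl_rtrancl sym_rtrancl adjrel_sym trans_rtrancl)

lemma RR_mono: "H \<subseteq> K \<Longrightarrow> RR H \<subseteq> RR K"
  by (rule rtrancl_mono) (auto simp: adjrel_def)

lemma edge_RR: "(a,b) \<in> H \<Longrightarrow> (a,b) \<in> RR H"
  by (auto simp: adjrel_def)

lemma edge_RR': "(a,b) \<in> H \<Longrightarrow> (b,a) \<in> RR H"
  by (auto simp: adjrel_def)

lemma edge_RR2: "e \<in> H \<Longrightarrow> (fst e, snd e) \<in> RR H"
  by (cases e) (auto simp: adjrel_def)

lemma blocks_eq: "blocks n H = (\<lambda>v. RR H `` {v}) ` {1..n}"
  by (auto simp: blocks_def quotient_def)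

lemma class_eq: "RR H `` {v} = RR H `` {w} \<longleftrightarrow> (v,w) \<in> RR H"
  using equiv_class_eq_iff[OF equiv_RR, of v w H] by simp

lemma in_class: "w \<in> RR H `` {v} \<longleftrightarrow> (v,w) \<in> RR H"
  by simp

lemma finite_blocks: "finite (blocks n H)"
  by (simp add: blocks_eq)

lemma adjrel_empty: "adjrel {} = {}"
  by (simp add: adjrel_def)

locale gr =
  fixes n :: nat and E :: "edge set"
  assumes gon: "graph_on n E"
begin

lemma E_sub: "E \<subseteq> {1..n} \<times> {1..n}"
  using gon by (auto simp: graph_on_def)

lemma finE: "finite E"
  by (rule finite_subset[OF E_sub]) simp

lemma edgeE: "(i,j) \<in> E \<Longrightarrow> 1 \<le> i \<and> i < j \<and> j \<le> n"
  using gon by (auto simp: graph_on_def)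

lemma RR_in_V:
  assumes "H \<subseteq> E" "(v,w) \<in> RR H"
  shows "v = w \<or> (v \<in> {1..n} \<and> w \<in> {1..n})"
  using assms(2)
proof (induct rule: rtrancl_induct)
  case base then show ?case by simp
next
  case (step y z)
  then have "y \<in> {1..n} \<and> z \<in> {1..n}" using assms(1) E_sub by (auto simp: adjrel_def)
  with step show ?case by auto
qed

lemma class_sub_V:
  assumes "H \<subseteq> E" "v \<in> {1..n}"
  shows "RR H `` {v} \<subseteq> {1..n}"
proof
  fix x assume "x \<in> RR H `` {v}"
  then have "(v,x) \<in> RR H" by simp
  from RR_in_V[OF assms(1) this] assms(2) show "x \<in> {1..n}" by blast
qed

lemma blocks_sub_V:
  assumes "H \<subseteq> E" "C \<in> blocks n H"
  shows "C \<subseteq> {1..n}"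
proof -
  obtain v where "v \<in> {1..n}" "C = RR H `` {v}" using assms(2) by (auto simp: blocks_eq)
  then show ?thesis using class_sub_V[OF assms(1)] by blast
qed

end


lemma RR_induced:
  assumes "(u,w) \<in> RR H"
  shows "(u,w) \<in> RR (induced_edges H (RR H `` {u}))"
  using assms
proof (induct rule: rtrancl_induct)
  case base then show ?case by simp
next
  case (step y z)
  have "(u,z) \<in> RR H" using step(1,2) by (meson rtrancl.rtrancl_into_rtrancl)
  then have "(y,z) \<in> adjrel (induced_edges H (RR H `` {u}))"
    using step(1,2) by (auto simp: adjrel_def induced_edges_def)
  with step(3) show ?case by (meson rtrancl.rtrancl_into_rtrancl)
qed

lemma block_connected:
  assumes "C \<in> blocks n H"
  shows "connected_on H C"
  unfolding connected_on_def
proof (intro ballI)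
  fix u w assume u: "u \<in> C" and w: "w \<in> C"
  obtain v where C: "C = RR H `` {v}" using assms by (auto simp: blocks_eq)
  have "(v,u) \<in> RR H" "(v,w) \<in> RR H" using u w C by auto
  then have uw: "(u,w) \<in> RR H" by (meson RR_sym RR_trans)
  have "C = RR H `` {u}" using C \<open>(v,u) \<in> RR H\<close> class_eq by metis
  then show "(u,w) \<in> RR (induced_edges H C)" using RR_induced[OF uw] by simp
qed

lemma connected_on_RR:
  assumes "connected_on X C" "u \<in> C" "w \<in> C"
  shows "(u,w) \<in> RR X"
proof -
  have "(u,w) \<in> RR (induced_edges X C)" using assms by (auto simp: connected_on_def)
  moreover have "induced_edges X C \<subseteq> X" by (auto simp: induced_edges_def)
  ultimately show ?thesis using RR_mono by blast
qed

lemma adjrel_mk_edge: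
  assumes "(a,b) \<in> adjrel S" "\<And>i j. (i,j) \<in> S \<Longrightarrow> i < j"
  shows "mk_edge a b \<in> S"
  using assms(1) by (auto simp: adjrel_def mk_edge_def min_def max_def dest: assms(2))

context gr
begin

definition clo :: "edge set \<Rightarrow> edge set" where
  "clo S = {e \<in> E. e \<in> RR S}"

lemma S_sub_clo: "S \<subseteq> E \<Longrightarrow> S \<subseteq> clo S"
  by (auto simp: clo_def adjrel_def)

lemma clo_RR: assumes "S \<subseteq> E" shows "RR (clo S) = RR S"
proof
  show "RR S \<subseteq> RR (clo S)" using RR_mono S_sub_clo[OF assms] by blast
  have "adjrel (clo S) \<subseteq> RR S"
    unfolding clo_def by (auto simp: adjrel_iff intro: RR_sym)
  then have "RR (clo S) \<subseteq> (RR S)\<^sup>*" by (rule rtrancl_mono)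
  then show "RR (clo S) \<subseteq> RR S" by simp
qed

lemma blocks_clo: "S \<subseteq> E \<Longrightarrow> blocks n (clo S) = blocks n S"
  by (simp add: blocks_def clo_RR)

lemma clo_sub_E: "clo S \<subseteq> E" by (auto simp: clo_def)

lemma clo_bond: assumes "S \<subseteq> E" shows "is_bond n E (clo S)"
  unfolding is_bond_def
proof (intro conjI ballI)
  show "clo S \<subseteq> E" by (rule clo_sub_E)
  fix C assume "C \<in> blocks n (clo S)"
  then obtain v where C: "C = RR S `` {v}" by (auto simp: blocks_eq clo_RR[OF assms])
  show "induced_edges (clo S) C = induced_edges E C"
  proof
    show "induced_edges (clo S) C \<subseteq> induced_edges E C" by (auto simp: induced_edges_def clo_def)
    show "induced_edges E C \<subseteq> induced_edges (clo S) C"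
    proof
      fix e assume "e \<in> induced_edges E C"
      then obtain i j where e: "e = (i,j)" "(i,j) \<in> E" "i \<in> C" "j \<in> C"
        by (auto simp: induced_edges_def)
      then have "(v,i) \<in> RR S" "(v,j) \<in> RR S" using C by auto
      then have "(i,j) \<in> RR S" by (meson RR_sym RR_trans)
      then show "e \<in> induced_edges (clo S) C" using e by (auto simp: induced_edges_def clo_def)
    qed
  qed
qed

lemma bond_closed:
  assumes "is_bond n E H" "(i,j) \<in> E" "(i,j) \<in> RR H"
  shows "(i,j) \<in> H"
proof -
  have i: "i \<in> {1..n}" using edgeE[OF assms(2)] by auto
  let ?C = "RR H `` {i}"
  have C: "?C \<in> blocks n H" using i by (auto simp: blocks_eq)
  have "(i,j) \<in> induced_edges E ?C" using assms(2,3) by (auto simp: induced_edges_def)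
  then have "(i,j) \<in> induced_edges H ?C" using assms(1) C by (auto simp: is_bond_def)
  then show ?thesis by (auto simp: induced_edges_def)
qed

lemma clo_sub:
  assumes "S \<subseteq> H" "is_bond n E H"
  shows "clo S \<subseteq> H"
proof
  fix e assume "e \<in> clo S"
  then obtain i j where e: "e = (i,j)" "(i,j) \<in> E" "(i,j) \<in> RR S" by (cases e) (auto simp: clo_def)
  then have "(i,j) \<in> RR H" using RR_mono[OF assms(1)] by blast
  then show "e \<in> H" using bond_closed[OF assms(2) e(2)] e(1) by simp
qed

lemma clo_bond_eq: assumes "is_bond n E H" shows "clo H = H"
proof
  show "clo H \<subseteq> H" using clo_sub[OF _ assms] by simp
  have "H \<subseteq> E" using assms by (simp add: is_bond_def)
  then show "H \<subseteq> clo H" by (rule S_sub_clo)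
qed

lemma blocks_image:
  assumes "RR X \<subseteq> RR Y"
  shows "blocks n Y = (\<lambda>C. RR Y `` C) ` blocks n X"
proof -
  have eq: "RR Y `` (RR X `` {v}) = RR Y `` {v}" for v
  proof
    show "RR Y `` {v} \<subseteq> RR Y `` (RR X `` {v})" by auto
    show "RR Y `` (RR X `` {v}) \<subseteq> RR Y `` {v}"
      using assms by (auto intro: RR_trans)
  qed
  show ?thesis unfolding blocks_eq image_image eq ..
qed

lemma cc_le:
  assumes "RR X \<subseteq> RR Y"
  shows "cc n Y \<le> cc n X"
  unfolding cc_def blocks_image[OF assms] by (rule card_image_le[OF finite_blocks])

lemma cc_eq_RR:
  assumes "RR X \<subseteq> RR Y" "cc n Y = cc n X" "u \<in> {1..n}" "w \<in> {1..n}" "(u,w) \<in> RR Y"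
  shows "(u,w) \<in> RR X"
proof -
  have inj: "inj_on (\<lambda>C. RR Y `` C) (blocks n X)"
    using assms(2) unfolding cc_def blocks_image[OF assms(1)]
    by (intro eq_card_imp_inj_on[OF finite_blocks]) simp
  have eq: "RR Y `` (RR X `` {v}) = RR Y `` {v}" for v
  proof
    show "RR Y `` {v} \<subseteq> RR Y `` (RR X `` {v})" by auto
    show "RR Y `` (RR X `` {v}) \<subseteq> RR Y `` {v}"
      using assms(1) by (auto intro: RR_trans)
  qed
  have "RR Y `` {u} = RR Y `` {w}" using assms(5) class_eq by metis
  then have "RR Y `` (RR X `` {u}) = RR Y `` (RR X `` {w})" by (simp add: eq)
  moreover have "RR X `` {u} \<in> blocks n X" "RR X `` {w} \<in> blocks n X"
    using assms(3,4) by (auto simp: blocks_eq)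
  ultimately have "RR X `` {u} = RR X `` {w}" using inj by (meson inj_onD)
  then show ?thesis using class_eq by metis
qed

lemma cc_eq_blocks:
  assumes "X \<subseteq> E" "Y \<subseteq> E" "RR X \<subseteq> RR Y" "cc n Y = cc n X"
  shows "blocks n X = blocks n Y"
proof -
  have "RR X `` {v} = RR Y `` {v}" if v: "v \<in> {1..n}" for v
  proof
    show "RR X `` {v} \<subseteq> RR Y `` {v}" using assms(3) by auto
    show "RR Y `` {v} \<subseteq> RR X `` {v}"
    proof
      fix w assume "w \<in> RR Y `` {v}"
      then have vw: "(v,w) \<in> RR Y" by simp
      then have "w \<in> {1..n}" using RR_in_V[OF assms(2) vw] v by auto
      then show "w \<in> RR X `` {v}" using cc_eq_RR[OF assms(3,4) v _ vw] by simp
    qed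
  qed
  then show ?thesis unfolding blocks_eq by (intro image_cong) auto
qed

lemma cc_eq_sub:
  assumes "X \<subseteq> Y" "is_bond n E X" "Y \<subseteq> E" "cc n Y = cc n X"
  shows "Y \<subseteq> X"
proof
  fix e assume eY: "e \<in> Y"
  obtain i j where e: "e = (i,j)" by (cases e)
  have ij: "(i,j) \<in> E" using eY e assms(3) by auto
  have "(i,j) \<in> RR Y" using eY e edge_RR by blast
  then have "(i,j) \<in> RR X"
    using cc_eq_RR[OF RR_mono[OF assms(1)] assms(4)] edgeE[OF ij] by auto
  then show "e \<in> X" using bond_closed[OF assms(2) ij] e by simp
qed

end

lemma RR_insert:
  "RR (insert (u,v) S) = RR S \<union> {(x,y). (x,u) \<in> RR S \<and> (v,y) \<in> RR S}
     \<union> {(x,y). (x,v) \<in> RR S \<and> (u,y) \<in> RR S}" (is "?L = ?R")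
proof
  have m: "RR S \<subseteq> ?L" by (rule RR_mono) auto
  have uv: "(u,v) \<in> ?L" "(v,u) \<in> ?L" by (auto intro: edge_RR edge_RR')
  show "?R \<subseteq> ?L"
  proof
    fix p assume "p \<in> ?R"
    then obtain x y where p: "p = (x,y)" and
      c: "(x,y) \<in> RR S \<or> ((x,u) \<in> RR S \<and> (v,y) \<in> RR S) \<or> ((x,v) \<in> RR S \<and> (u,y) \<in> RR S)"
      by (cases p) auto
    from c show "p \<in> ?L" unfolding p
      using m uv by (meson RR_trans subsetD)
  qed
  show "?L \<subseteq> ?R"
  proof
    fix p assume "p \<in> ?L"
    then obtain x y where p: "p = (x,y)" and xy: "(x,y) \<in> ?L" by (cases p) auto
    from xy have "(x,y) \<in> ?R"
    proof (induct rule: rtrancl_induct)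
      case base then show ?case by simp
    next
      case (step y z)
      from step(2) have "(y,z) \<in> adjrel S \<or> (y,z) = (u,v) \<or> (y,z) = (v,u)"
        by (auto simp: adjrel_def)
      then show ?case
      proof (elim disjE)
        assume a: "(y,z) \<in> adjrel S"
        then have "(y,z) \<in> RR S" by auto
        moreover have "(z,y) \<in> RR S" using a adjrel_sym by (metis RR_sym \<open>(y,z) \<in> RR S\<close>)
        ultimately show ?thesis using step(3) by (auto intro: RR_trans)
      next
        assume a: "(y,z) = (u,v)"
        then show ?thesis using step(3) by (auto intro: RR_trans RR_sym)
      next
        assume a: "(y,z) = (v,u)"
        then show ?thesis using step(3) by (auto intro: RR_trans RR_sym)
      qed
    qed
    then show "p \<in> ?R" using p by simp
  qed
qed

lemma cc_empty: "cc n {} = n"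
proof -
  have "RR {} = Id" by (simp add: adjrel_empty)
  then have "blocks n {} = (\<lambda>v. {v}) ` {1..n}" by (simp add: blocks_eq)
  then show ?thesis by (simp add: cc_def card_image)
qed

context gr
begin

lemma cc_merge:
  assumes S: "S \<subseteq> E" and uvE: "(u,v) \<in> E" and nuv: "(u,v) \<notin> RR S"
  shows "cc n (insert (u,v) S) + 1 = cc n S"
proof -
  let ?Cu = "RR S `` {u}" and ?Cv = "RR S `` {v}"
  let ?X = "?Cu \<union> ?Cv"
  have uV: "u \<in> {1..n}" and vV: "v \<in> {1..n}" using edgeE[OF uvE] by auto
  have cls: "RR (insert (u,v) S) `` {w} = (if w \<in> ?X then ?X else RR S `` {w})" for w
  proof (cases "w \<in> ?Cu")
    case True
    then have wu: "(u,w) \<in> RR S" by simp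
    have "(w,v) \<notin> RR S" using wu nuv RR_trans by blast
    then show ?thesis using True wu unfolding RR_insert
      by (auto intro: RR_trans RR_sym)
  next
    case False
    note F = False
    show ?thesis
    proof (cases "w \<in> ?Cv")
      case True
      then have wv: "(v,w) \<in> RR S" by simp
      have "(w,u) \<notin> RR S" using wv nuv RR_trans RR_sym by blast
      then show ?thesis using True wv unfolding RR_insert
        by (auto intro: RR_trans RR_sym)
    next
      case False
      have "(w,u) \<notin> RR S" "(w,v) \<notin> RR S" using F False RR_sym by auto
      then show ?thesis using F False unfolding RR_insert by auto
    qed
  qed
  have b1: "blocks n (insert (u,v) S) = insert ?X ((\<lambda>w. RR S `` {w}) ` ({1..n} - ?X))"
  proof -
    have "blocks n (insert (u,v) S) = (\<lambda>w. if w \<in> ?X then ?X else RR S `` {w}) ` {1..n}"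
      unfolding blocks_eq cls ..
    also have "\<dots> = insert ?X ((\<lambda>w. RR S `` {w}) ` ({1..n} - ?X))"
      using uV by (auto simp: image_iff split: if_splits)
    finally show ?thesis .
  qed
  have b2: "(\<lambda>w. RR S `` {w}) ` ({1..n} - ?X) = blocks n S - {?Cu, ?Cv}"
  proof -
    have "RR S `` {w} \<noteq> ?Cu \<and> RR S `` {w} \<noteq> ?Cv \<longleftrightarrow> w \<notin> ?X" for w
      using class_eq[of S w u] class_eq[of S w v] RR_sym by auto
    then show ?thesis unfolding blocks_eq by auto
  qed
  have Xn: "?X \<notin> blocks n S - {?Cu, ?Cv}"
  proof
    assume "?X \<in> blocks n S - {?Cu, ?Cv}"
    then obtain z where z: "?X = RR S `` {z}" "?X \<noteq> ?Cu" by (auto simp: blocks_eq)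
    have "u \<in> ?X" "v \<in> ?X" by auto
    then have "(z,u) \<in> RR S" "(z,v) \<in> RR S" using z by auto
    then show False using nuv RR_sym RR_trans by blast
  qed
  have ne: "?Cu \<noteq> ?Cv" using class_eq nuv by metis
  have inb: "?Cu \<in> blocks n S" "?Cv \<in> blocks n S" using uV vV by (auto simp: blocks_eq)
  have "cc n (insert (u,v) S) = card (blocks n S - {?Cu, ?Cv}) + 1"
    unfolding cc_def b1 b2 using Xn finite_blocks by simp
  also have "card (blocks n S - {?Cu, ?Cv}) = card (blocks n S) - 2"
    using inb ne finite_blocks by (simp add: card_Diff_subset)
  finally have eq: "cc n (insert (u,v) S) = card (blocks n S) - 2 + 1" .
  have "card {?Cu, ?Cv} \<le> card (blocks n S)"
    using inb by (intro card_mono[OF finite_blocks]) auto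
  then have "2 \<le> card (blocks n S)" using ne by simp
  then show ?thesis using eq unfolding cc_def by simp
qed

end

lemma suc_mod: "(i::nat) < L \<Longrightarrow> (i+1) mod L = (if i+1 = L then 0 else i+1)"
  by (cases "i+1 = L") auto

lemma mk_edge_adj: "mk_edge a b \<in> T \<Longrightarrow> (a,b) \<in> adjrel T"
  by (cases "a \<le> b") (auto simp: mk_edge_def adjrel_def min_def max_def)

lemma mk_edge_eq: "mk_edge a b = mk_edge c d \<Longrightarrow> (a = c \<and> b = d) \<or> (a = d \<and> b = c)"
  by (auto simp: mk_edge_def min_def max_def split: if_splits)

lemma chain_RR:
  assumes "\<And>j. a \<le> j \<Longrightarrow> j < b \<Longrightarrow> (f j, f (Suc j)) \<in> RR T" "a \<le> k" "k \<le> b"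
  shows "(f a, f k) \<in> RR T"
  using assms(2,3)
proof (induct k)
  case 0 then show ?case by simp
next
  case (Suc k)
  show ?case
  proof (cases "a = Suc k")
    case True then show ?thesis by simp
  next
    case False
    then have "a \<le> k" "k < b" using Suc by auto
    then show ?thesis using Suc(1) assms(1) by (meson RR_trans less_imp_le)
  qed
qed

lemma cycle_conn:
  assumes L: "length vs = L" "3 \<le> L" and i0: "i0 < L"
    and T: "\<And>j. j < L \<Longrightarrow> j \<noteq> i0 \<Longrightarrow> mk_edge (vs!j) (vs!((j+1) mod L)) \<in> T"
  shows "j < L \<Longrightarrow> k < L \<Longrightarrow> (vs!j, vs!k) \<in> RR T"
proof -
  let ?f = "\<lambda>j. vs ! j"
  have st: "(vs!j, vs!(Suc j)) \<in> RR T" if "j < L" "j \<noteq> i0" "j + 1 < L" for j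
  proof -
    have "(j+1) mod L = j + 1" using that by simp
    then have "mk_edge (vs!j) (vs!(Suc j)) \<in> T" using T[OF that(1,2)] by simp
    then show ?thesis using mk_edge_adj by blast
  qed
  have seg1: "(vs!0, vs!k) \<in> RR T" if "k \<le> i0" for k
    using chain_RR[of 0 i0 ?f T k] st i0 that by auto
  have seg2: "(vs!(i0+1), vs!k) \<in> RR T" if "i0 + 1 \<le> k" "k \<le> L - 1" for k
    using chain_RR[of "i0+1" "L - 1" ?f T k] st i0 that by auto
  have all0: "(vs!0, vs!k) \<in> RR T" if "k < L" for k
  proof (cases "k \<le> i0")
    case True then show ?thesis using seg1 by simp
  next
    case False
    then have ne: "L - 1 \<noteq> i0" using that by auto
    have "mk_edge (vs!(L-1)) (vs!(((L-1)+1) mod L)) \<in> T" using T[of "L-1"] ne L by auto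
    moreover have "((L-1)+1) mod L = 0" using L by simp
    ultimately have "(vs!(L-1), vs!0) \<in> RR T" using mk_edge_adj by fastforce
    moreover have "(vs!(i0+1), vs!(L-1)) \<in> RR T" "(vs!(i0+1), vs!k) \<in> RR T"
      using seg2 False that by auto
    ultimately show ?thesis by (meson RR_sym RR_trans)
  qed
  show "j < L \<Longrightarrow> k < L \<Longrightarrow> (vs!j, vs!k) \<in> RR T"
    using all0 by (meson RR_sym RR_trans)
qed

lemma cycle_edges_distinct:
  assumes "distinct vs" "length vs = L" "3 \<le> L" "i < L" "j < L"
    and "mk_edge (vs!i) (vs!((i+1) mod L)) = mk_edge (vs!j) (vs!((j+1) mod L))"
  shows "i = j"
proof -
  have ii: "(i+1) mod L < L" "(j+1) mod L < L" using assms by auto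
  from mk_edge_eq[OF assms(6)] show ?thesis
  proof
    assume "vs!i = vs!j \<and> vs!((i+1) mod L) = vs!((j+1) mod L)"
    then show ?thesis using assms nth_eq_iff_index_eq by blast
  next
    assume a: "vs!i = vs!((j+1) mod L) \<and> vs!((i+1) mod L) = vs!j"
    then have "i = (j+1) mod L" "(i+1) mod L = j"
      using assms ii nth_eq_iff_index_eq by blast+
    moreover have "(j+1) mod L = (if j+1 = L then 0 else j+1)" using assms(5) by (rule suc_mod)
    moreover have "(i+1) mod L = (if i+1 = L then 0 else i+1)" using assms(4) by (rule suc_mod)
    ultimately show ?thesis using assms(3,4,5) by (auto split: if_splits)
  qed
qed

lemma cycle_minus_conn:
  assumes C: "C \<in> cycle_sets X" and sub: "C - {m} \<subseteq> T"
  shows "\<exists>vs. set vs \<noteq> {} \<and> (\<forall>x\<in>set vs. \<forall>y\<in>set vs. (x,y) \<in> RR T) \<and>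
      (\<forall>e\<in>C. fst e \<in> set vs \<and> snd e \<in> set vs)"
proof -
  obtain vs where vs: "length vs \<ge> 3" "distinct vs"
    "C = {mk_edge (vs ! i) (vs ! ((i + 1) mod length vs)) | i. i < length vs}"
    using C by (auto simp: cycle_sets_def)
  let ?L = "length vs"
  let ?e = "\<lambda>i. mk_edge (vs ! i) (vs ! ((i + 1) mod ?L))"
  obtain i0 where i0: "i0 < ?L" "\<And>j. j < ?L \<Longrightarrow> j \<noteq> i0 \<Longrightarrow> ?e j \<in> T"
  proof (cases "\<exists>i<?L. ?e i = m")
    case True
    then obtain i where i: "i < ?L" "?e i = m" by blast
    show ?thesis
    proof (rule that[OF i(1)])
      fix j assume j: "j < ?L" "j \<noteq> i"
      then have "?e j \<noteq> m" using cycle_edges_distinct[OF vs(2) refl vs(1) j(1) i(1)] i(2) by auto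
      moreover have "?e j \<in> C" using vs(3) j by auto
      ultimately show "?e j \<in> T" using sub by auto
    qed
  next
    case False
    show ?thesis
    proof (rule that[of 0])
      show "0 < ?L" using vs(1) by linarith
      fix j assume j: "j < ?L" "j \<noteq> 0"
      then have "?e j \<noteq> m" using False by auto
      moreover have "?e j \<in> C" using vs(3) j by auto
      ultimately show "?e j \<in> T" using sub by auto
    qed
  qed
  have conn: "\<forall>x\<in>set vs. \<forall>y\<in>set vs. (x,y) \<in> RR T"
    using cycle_conn[OF refl vs(1) i0(1)] i0(2) by (metis in_set_conv_nth)
  have "\<forall>e\<in>C. fst e \<in> set vs \<and> snd e \<in> set vs"
  proof
    fix e assume "e \<in> C"
    then obtain i where i: "i < ?L" "e = ?e i" using vs(3) by auto
    have "(i+1) mod ?L < ?L" using i by (intro mod_less_divisor) linarith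
    then have "vs!i \<in> set vs" "vs!((i+1) mod ?L) \<in> set vs" using i by auto
    then show "fst e \<in> set vs \<and> snd e \<in> set vs" using i(2)
      by (auto simp: mk_edge_def min_def max_def)
  qed
  moreover have "set vs \<noteq> {}" using vs(1) by (cases vs) auto
  ultimately show ?thesis using conn by blast
qed

context gr
begin

lemma S_lt: "S \<subseteq> E \<Longrightarrow> (i,j) \<in> S \<Longrightarrow> i < j"
  using edgeE by blast

lemma path_cycle:
  assumes S: "S \<subseteq> E" and uvE: "(u,v) \<in> E" and nS: "(u,v) \<notin> S" and uv: "(u,v) \<in> RR S"
  shows "cycle_sets (insert (u,v) S) \<noteq> {}"
proof -
  let ?P = "\<lambda>x y. (x,y) \<in> adjrel S"
  have ult: "u < v" using edgeE[OF uvE] by simp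
  have "?P\<^sup>*\<^sup>* u v" using uv by (simp add: rtranclp_rtrancl_eq)
  then obtain xs where "rtrancl_path ?P u xs v" using rtranclp_eq_rtrancl_path by metis
  then obtain xs' where p: "rtrancl_path ?P u xs' v" and d: "distinct (u # xs')"
    using rtrancl_path_distinct by metis
  have ne: "xs' \<noteq> []"
  proof
    assume "xs' = []"
    then have "u = v" using p by (auto elim: rtrancl_path.cases)
    then show False using ult by simp
  qed
  have lastv: "last xs' = v" using rtrancl_path_last[OF p ne] .
  have len: "length xs' \<ge> 2"
  proof (rule ccontr)
    assume "\<not> length xs' \<ge> 2"
    moreover have "length xs' \<noteq> 0" using ne by simp
    ultimately have "length xs' = 1" by linarith
    then obtain y where y: "xs' = [y]" by (auto simp: length_Suc_conv)
    then have "y = v" using lastv by simp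
    have "?P u y" using rtrancl_path_nth[OF p, of 0] y by simp
    then have "(u,v) \<in> S \<or> (v,u) \<in> S" using \<open>y = v\<close> by (auto simp: adjrel_def)
    then show False using nS S_lt[OF S, of v u] ult by auto
  qed
  define vs where "vs = u # xs'"
  let ?L = "length vs"
  have L: "?L = length xs' + 1" by (simp add: vs_def)
  define C where "C = {mk_edge (vs ! i) (vs ! ((i + 1) mod ?L)) | i. i < ?L}"
  have "C \<subseteq> insert (u,v) S"
  proof
    fix e assume "e \<in> C"
    then obtain i where i: "i < ?L" "e = mk_edge (vs ! i) (vs ! ((i + 1) mod ?L))"
      unfolding C_def by blast
    show "e \<in> insert (u,v) S"
    proof (cases "i < length xs'")
      case True
      then have "(i+1) mod ?L = Suc i" using L by simp
      moreover have "vs ! Suc i = xs' ! i" by (simp add: vs_def)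
      moreover have "?P (vs ! i) (xs' ! i)" using rtrancl_path_nth[OF p True] by (simp add: vs_def)
      ultimately have "e = mk_edge (vs ! i) (xs' ! i)" using i(2) by simp
      then have "e \<in> S" using adjrel_mk_edge[OF \<open>?P (vs ! i) (xs' ! i)\<close>] S_lt[OF S] by auto
      then show ?thesis by simp
    next
      case False
      then have ii: "i = length xs'" using i L by simp
      then have "(i+1) mod ?L = 0" using L by simp
      moreover have "vs ! i = v" using ii lastv ne by (simp add: vs_def last_conv_nth)
      moreover have "vs ! 0 = u" by (simp add: vs_def)
      ultimately have "e = mk_edge v u" using i(2) by simp
      then have "e = (u,v)" using ult by (simp add: mk_edge_def)
      then show ?thesis by simp
    qed
  qed
  moreover have "?L \<ge> 3" using len L by simp
  moreover have "distinct vs" using d by (simp add: vs_def)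
  ultimately have "C \<in> cycle_sets (insert (u,v) S)"
    unfolding cycle_sets_def C_def by blast
  then show ?thesis by blast
qed

lemma cycle_sets_mono: "X \<subseteq> Y \<Longrightarrow> cycle_sets X \<subseteq> cycle_sets Y"
  by (auto simp: cycle_sets_def)

lemma forest_count:
  assumes "S \<subseteq> E" "cycle_sets S = {}"
  shows "card S + cc n S = n"
proof -
  have fin: "finite S" using assms(1) finE finite_subset by blast
  show ?thesis using fin assms
  proof (induct S rule: finite_induct)
    case empty then show ?case by (simp add: cc_empty)
  next
    case (insert e F)
    obtain u v where e: "e = (u,v)" by (cases e)
    have F: "F \<subseteq> E" "cycle_sets F = {}"
      using insert(4,5) cycle_sets_mono[of F "insert e F"] by auto
    have IH: "card F + cc n F = n" using insert(3)[OF F] .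
    have uvE: "(u,v) \<in> E" using insert(4) e by auto
    have "(u,v) \<notin> RR F" using path_cycle[OF F(1) uvE] insert(2,5) e by auto
    then have "cc n (insert (u,v) F) + 1 = cc n F" using cc_merge[OF F(1) uvE] by simp
    moreover have "card (insert e F) = card F + 1" using insert(1,2) by simp
    ultimately show ?case using IH e by simp
  qed
qed

end

definition btw :: "nat \<Rightarrow> nat \<Rightarrow> nat \<Rightarrow> bool" where
  "btw x y z \<longleftrightarrow> min x y < z \<and> z < max x y"

lemma parity_edge:
  assumes "(a,c) \<in> RR S" "btw x y a \<noteq> btw x y c"
  shows "\<exists>u w. (u,w) \<in> S \<and> (a,u) \<in> RR S \<and> (a,w) \<in> RR S \<and> btw x y u \<noteq> btw x y w"
  using assms
proof (induct rule: rtrancl_induct)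
  case base then show ?case by simp
next
  case (step y' z)
  show ?case
  proof (cases "btw x y a = btw x y y'")
    case False then show ?thesis using step(3) by blast
  next
    case True
    then have d: "btw x y y' \<noteq> btw x y z" using step(4) by simp
    have az: "(a,z) \<in> RR S" using step(1,2) by (meson rtrancl.rtrancl_into_rtrancl)
    from step(2) have "(y',z) \<in> S \<or> (z,y') \<in> S" by (simp add: adjrel_def)
    then show ?thesis using d az step(1) by (metis (full_types))
  qed
qed

lemma sep_sym:
  assumes "u \<noteq> x" "u \<noteq> y" "w \<noteq> x" "w \<noteq> y"
    and "btw x y u \<noteq> btw x y w"
  shows "btw u w x \<noteq> btw u w y"
  using assms unfolding btw_def min_def max_def by (auto split: if_splits)

lemma cross_of_sep:
  assumes "u < w" "p < q" "p \<noteq> u" "p \<noteq> w" "q \<noteq> u" "q \<noteq> w"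
    and "btw u w p \<noteq> btw u w q"
  shows "crosses (u,w) (p,q)"
  using assms unfolding btw_def crosses_def min_def max_def by (auto split: if_splits)

context gr
begin

lemma blocks_diff_RR:
  assumes "B \<in> blocks n S" "B' \<in> blocks n S" "B \<noteq> B'" "a \<in> B" "b \<in> B'"
  shows "(a,b) \<notin> RR S"
proof
  assume ab: "(a,b) \<in> RR S"
  obtain v v' where v: "B = RR S `` {v}" "B' = RR S `` {v'}" using assms(1,2) by (auto simp: blocks_eq)
  have "(v,a) \<in> RR S" "(v',b) \<in> RR S" using assms(4,5) v by auto
  then have "(v,v') \<in> RR S" using ab by (meson RR_sym RR_trans)
  then show False using assms(3) v class_eq by metis
qed

lemma crossing_edges:
  assumes S: "S \<subseteq> E" and cp: "crossing_partition (blocks n S)"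
  shows "\<exists>e\<in>S. \<exists>f\<in>S. crosses e f \<and> (fst e, fst f) \<notin> RR S"
proof -
  obtain B B' a c b d where BB: "B \<in> blocks n S" "B' \<in> blocks n S" "B \<noteq> B'"
    and m: "a \<in> B" "c \<in> B" "b \<in> B'" "d \<in> B'" and o: "a < b" "b < c" "c < d"
    using cp unfolding crossing_partition_def by blast
  obtain v where vB: "B = RR S `` {v}" using BB(1) by (auto simp: blocks_eq)
  obtain v' where vB': "B' = RR S `` {v'}" using BB(2) by (auto simp: blocks_eq)
  have ac: "(a,c) \<in> RR S" using m vB by (meson Image_singleton_iff RR_sym RR_trans)
  have bd: "(b,d) \<in> RR S" using m vB' by (meson Image_singleton_iff RR_sym RR_trans)
  have nab: "(a,b) \<notin> RR S" "(a,d) \<notin> RR S" using blocks_diff_RR[OF BB] m by auto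
  have "btw b d a \<noteq> btw b d c" using o by (simp add: btw_def)
  then obtain u w where uw: "(u,w) \<in> S" "(a,u) \<in> RR S" "(a,w) \<in> RR S" "btw b d u \<noteq> btw b d w"
    using parity_edge[OF ac] by blast
  have ub: "u \<noteq> b" "u \<noteq> d" "w \<noteq> b" "w \<noteq> d" using uw(2,3) nab by auto
  have s2: "btw u w b \<noteq> btw u w d" using sep_sym[OF ub uw(4)] .
  then obtain p q where pq: "(p,q) \<in> S" "(b,p) \<in> RR S" "(b,q) \<in> RR S" "btw u w p \<noteq> btw u w q"
    using parity_edge[OF bd] by blast
  have nup: "(u,p) \<notin> RR S"
  proof
    assume "(u,p) \<in> RR S"
    then have "(a,b) \<in> RR S" using uw(2) pq(2) by (meson RR_sym RR_trans)
    then show False using nab by simp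
  qed
  have nuq: "(u,q) \<notin> RR S"
  proof
    assume "(u,q) \<in> RR S"
    then have "(a,b) \<in> RR S" using uw(2) pq(3) by (meson RR_sym RR_trans)
    then show False using nab by simp
  qed
  have nwp: "(w,p) \<notin> RR S"
  proof
    assume "(w,p) \<in> RR S"
    then have "(a,b) \<in> RR S" using uw(3) pq(2) by (meson RR_sym RR_trans)
    then show False using nab by simp
  qed
  have nwq: "(w,q) \<notin> RR S"
  proof
    assume "(w,q) \<in> RR S"
    then have "(a,b) \<in> RR S" using uw(3) pq(3) by (meson RR_sym RR_trans)
    then show False using nab by simp
  qed
  have ne: "p \<noteq> u" "p \<noteq> w" "q \<noteq> u" "q \<noteq> w" using nup nuq nwp nwq by auto
  have "crosses (u,w) (p,q)"
    using cross_of_sep[OF S_lt[OF S uw(1)] S_lt[OF S pq(1)] ne pq(4)] .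
  then show ?thesis using uw(1) pq(1) nup by fastforce
qed

lemma noncross_blocks:
  assumes "S \<subseteq> E" "\<forall>e\<in>S. \<forall>f\<in>S. \<not> crosses e f"
  shows "\<not> crossing_partition (blocks n S)"
  using crossing_edges[OF assms(1)] assms(2) by blast

lemma E_noncross:
  assumes cc: "crossing_closed n E"
  shows "\<not> crossing_partition (blocks n E)"
proof
  assume "crossing_partition (blocks n E)"
  then obtain e f where ef: "e \<in> E" "f \<in> E" "crosses e f" "(fst e, fst f) \<notin> RR E"
    using crossing_edges[of E] by blast
  have "crossing_closed_pair n E e f" using cc ef unfolding crossing_closed_def by blast
  then obtain S0 where "is_minimal_J n E e f S0" unfolding crossing_closed_pair_def by blast
  then have S0: "S0 \<in> J_candidates n E e f" by (simp add: is_minimal_J_def)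
  then have "connected_on E S0" "e \<in> induced_edges E S0" "f \<in> induced_edges E S0"
    by (auto simp: J_candidates_def)
  then have "fst e \<in> S0" "fst f \<in> S0" by (auto simp: induced_edges_def)
  then have "(fst e, fst f) \<in> RR E" using connected_on_RR \<open>connected_on E S0\<close> by blast
  then show False using ef by simp
qed

lemma E_NC: "crossing_closed n E \<Longrightarrow> E \<in> NC n E"
  using E_noncross by (simp add: NC_def noncrossing_bond_def is_bond_def)

end

lemma crosses_sym: "crosses e f \<longleftrightarrow> crosses f e"
  by (auto simp: crosses_def)

lemma crosses_irrefl: "\<not> crosses e e"
  by (auto simp: crosses_def)

context gr
begin

lemma crossing_partitionI:
  assumes "B \<in> P" "B' \<in> P" "B \<noteq> B'" "a \<in> B" "c \<in> B" "b \<in> B'" "d \<in> B'"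
   "a < b" "b < c" "c < d"
  shows "crossing_partition P"
  unfolding crossing_partition_def
  apply (rule bexI[where x=B], rule bexI[where x=B'])
    apply (rule conjI, rule assms(3))
    apply (rule bexI[where x=a], rule bexI[where x=c], rule bexI[where x=b], rule bexI[where x=d])
  using assms by auto

lemma cross_edges_partition:
  assumes H: "H \<subseteq> E" and ef: "e \<in> H" "f \<in> H" "crosses e f" and nr: "(fst e, fst f) \<notin> RR H"
  shows "crossing_partition (blocks n H)"
proof -
  obtain a b where e: "e = (a,b)" by (cases e)
  obtain c d where f: "f = (c,d)" by (cases f)
  have ab: "(a,b) \<in> H" and cd: "(c,d) \<in> H" using ef e f by auto
  have aV: "a \<in> {1..n}" using edgeE[of a b] ab H by auto
  have cV: "c \<in> {1..n}" using edgeE[of c d] cd H by auto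
  define B where "B = RR H `` {a}"
  define B' where "B' = RR H `` {c}"
  have B: "B \<in> blocks n H" "B' \<in> blocks n H" using aV cV by (auto simp: blocks_eq B_def B'_def)
  have ne: "B \<noteq> B'"
  proof
    assume "B = B'"
    then have "(a,c) \<in> RR H" using class_eq[of H a c] unfolding B_def B'_def by simp
    then show False using nr e f by simp
  qed
  have m: "a \<in> B" "b \<in> B" "c \<in> B'" "d \<in> B'"
    using edge_RR[OF ab] edge_RR[OF cd] unfolding B_def B'_def by auto
  from ef(3) have "(a < c \<and> c < b \<and> b < d) \<or> (c < a \<and> a < d \<and> d < b)"
    by (simp add: crosses_def e f)
  then show ?thesis
  proof
    assume o: "a < c \<and> c < b \<and> b < d"
    show ?thesis using crossing_partitionI[OF B(1) B(2) ne m(1) m(2) m(3) m(4)] o by simp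
  next
    assume o: "c < a \<and> a < d \<and> d < b"
    show ?thesis using crossing_partitionI[OF B(2) B(1) ne[symmetric] m(3) m(4) m(1) m(2)] o by simp
  qed
qed

lemma NC_sub: "H \<in> NC n E \<Longrightarrow> H \<subseteq> E"
  by (simp add: NC_def noncrossing_bond_def is_bond_def)

lemma NC_bond: "H \<in> NC n E \<Longrightarrow> is_bond n E H"
  by (simp add: NC_def noncrossing_bond_def)

lemma NC_nc: "H \<in> NC n E \<Longrightarrow> \<not> crossing_partition (blocks n H)"
  by (simp add: NC_def noncrossing_bond_def)

lemma finite_NC: "finite (NC n E)"
proof -
  have "NC n E \<subseteq> Pow E" using NC_sub by auto
  then show ?thesis using finE finite_subset by blast
qed

lemma bond_conn_E:
  assumes "is_bond n E H" "C \<in> blocks n H"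
  shows "connected_on E C"
proof -
  have "connected_on H C" by (rule block_connected[OF assms(2)])
  moreover have "induced_edges H C = induced_edges E C" using assms by (simp add: is_bond_def)
  ultimately show ?thesis by (simp add: connected_on_def)
qed

end

locale gr2 = gr +
  fixes r :: "(edge \<times> edge) set"
  assumes lin: "linear_order_on E r"
    and ucc: "upper_crossing_closed n E r"
begin

lemma r_po: "partial_order_on E r"
  using lin by (simp add: linear_order_on_def)

lemma r_antisym: "(x,y) \<in> r \<Longrightarrow> (y,x) \<in> r \<Longrightarrow> x = y"
  using partial_order_onD(3)[OF r_po] by (rule antisymD)

lemma r_refl: "x \<in> E \<Longrightarrow> (x,x) \<in> r"
  using partial_order_onD(1)[OF r_po] by (simp add: refl_on_def)

lemma r_trans: "(x,y) \<in> r \<Longrightarrow> (y,z) \<in> r \<Longrightarrow> (x,z) \<in> r"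
  using partial_order_onD(2)[OF r_po] by (rule transD)

lemma r_total: "x \<in> E \<Longrightarrow> y \<in> E \<Longrightarrow> (x,y) \<in> r \<or> (y,x) \<in> r"
proof -
  assume xy: "x \<in> E" "y \<in> E"
  have "total_on E r" using lin by (simp add: linear_order_on_def)
  then show ?thesis using xy r_refl unfolding total_on_def by (cases "x = y") auto
qed

lemma cclosed: "crossing_closed n E"
  using ucc by (simp add: upper_crossing_closed_def)

lemma r_min_exists:
  assumes "H \<subseteq> E" "H \<noteq> {}"
  shows "\<exists>e0\<in>H. \<forall>c\<in>H. (e0,c) \<in> r"
proof -
  have "finite H" using assms(1) finE finite_subset by blast
  from this assms(2) assms(1) show ?thesis
  proof (induct H rule: finite_ne_induct)
    case (singleton x) then show ?case using r_refl by auto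
  next
    case (insert x F)
    then obtain m where m: "m \<in> F" "\<forall>c\<in>F. (m,c) \<in> r" by auto
    have xE: "x \<in> E" "m \<in> E" using insert m by auto
    show ?case
    proof (cases "(x,m) \<in> r")
      case True
      have "\<forall>c\<in>insert x F. (x,c) \<in> r"
      proof
        fix c assume "c \<in> insert x F"
        then show "(x,c) \<in> r"
        proof
          assume "c = x" then show ?thesis using r_refl xE by simp
        next
          assume "c \<in> F" then have "(m,c) \<in> r" using m by blast
          then show ?thesis using r_trans[OF True] by simp
        qed
      qed
      then show ?thesis by blast
    next
      case False
      then have "(m,x) \<in> r" using r_total[OF xE] by blast
      then show ?thesis using m by blast
    qed
  qed
qed

lemma min_edge_eq:
  assumes "e0 \<in> C" "\<forall>c\<in>C. (e0,c) \<in> r"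
  shows "min_edge r C = e0"
  unfolding min_edge_def
proof (rule the_equality)
  show "e0 \<in> C \<and> (\<forall>c\<in>C. (e0, c) \<in> r)" using assms by blast
  fix e assume "e \<in> C \<and> (\<forall>c\<in>C. (e, c) \<in> r)"
  then show "e = e0" using assms r_antisym by blast
qed

lemma min_nocross:
  assumes H: "H \<in> NC n E" and e0: "e0 \<in> H" "\<forall>c\<in>H. (e0,c) \<in> r"
    and f: "f \<in> H"
  shows "\<not> crosses e0 f"
proof
  assume cr: "crosses e0 f"
  have HE: "H \<subseteq> E" using NC_sub[OF H] .
  have same: "(fst e0, fst f) \<in> RR H"
    using cross_edges_partition[OF HE e0(1) f cr] NC_nc[OF H] by blast
  obtain a b where e: "e0 = (a,b)" by (cases e0)
  obtain c d where fd: "f = (c,d)" by (cases f)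
  have "(a,b) \<in> E" using e0(1) HE e by auto
  then have aV: "a \<in> {1..n}" using edgeE[of a b] by auto
  define B where "B = RR H `` {a}"
  have Bb: "B \<in> blocks n H" using aV by (auto simp: blocks_eq B_def)
  have ab: "(a,b) \<in> RR H" using edge_RR[of a b H] e0(1) e by simp
  have cd: "(c,d) \<in> RR H" using edge_RR[of c d H] f fd by simp
  have ac: "(a,c) \<in> RR H" using same e fd by simp
  have ad: "(a,d) \<in> RR H" using RR_trans[OF ac cd] .
  have inB: "a \<in> B" "b \<in> B" "c \<in> B" "d \<in> B"
    using ab ac ad by (auto simp: B_def)
  have BV: "B \<subseteq> {1..n}" using blocks_sub_V[OF HE Bb] .
  have Bc: "connected_on E B" using bond_conn_E[OF NC_bond[OF H] Bb] .
  have e0E: "e0 \<in> E" "f \<in> E" using e0 f HE by auto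
  have cand: "B \<in> J_candidates n E e0 f"
    using BV Bc inB e0E e fd by (auto simp: J_candidates_def induced_edges_def)
  let ?Cs = "{S \<in> J_candidates n E e0 f. S \<subseteq> B}"
  have finCs: "finite ?Cs"
  proof -
    have "?Cs \<subseteq> Pow B" by auto
    moreover have "finite B" using BV finite_subset by blast
    ultimately show ?thesis using finite_subset by blast
  qed
  have "?Cs \<noteq> {}" using cand by blast
  then obtain S0 where S0: "S0 \<in> ?Cs" "\<forall>S\<in>?Cs. S \<le> S0 \<longrightarrow> S0 = S"
    using finite_has_minimal[OF finCs] by blast
  have minJ: "is_minimal_J n E e0 f S0"
    unfolding is_minimal_J_def using S0 by auto
  have "crossing_closed_pair n E e0 f" using cclosed e0E cr by (simp add: crossing_closed_def)
  then have ex1: "\<exists>!S. is_minimal_J n E e0 f S" by (simp add: crossing_closed_pair_def)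
  have theS: "(THE S. is_minimal_J n E e0 f S) = S0" using the1_equality[OF ex1 minJ] .
  have "\<forall>e\<in>E. \<forall>f\<in>E. crosses e f \<longrightarrow>
        (\<exists>h\<in>J_edges n E e f. (h,e) \<in> r \<and> h \<noteq> e \<and> (h,f) \<in> r \<and> h \<noteq> f)"
    using ucc unfolding upper_crossing_closed_def by (rule conjunct2)
  then have "\<exists>h\<in>J_edges n E e0 f. (h,e0) \<in> r \<and> h \<noteq> e0 \<and> (h,f) \<in> r \<and> h \<noteq> f"
    using e0E cr by blast
  then obtain h where h: "h \<in> J_edges n E e0 f" "(h,e0) \<in> r" "h \<noteq> e0" by blast
  have "h \<in> induced_edges E S0" using h(1) theS by (simp add: J_edges_def)
  then have "h \<in> induced_edges E B" using S0 by (auto simp: induced_edges_def)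
  then have "h \<in> induced_edges H B" using NC_bond[OF H] Bb by (simp add: is_bond_def)
  then have "h \<in> H" by (auto simp: induced_edges_def)
  then have "(e0,h) \<in> r" using e0(2) by blast
  then show False using h r_antisym by blast
qed

lemma ncnbc_fin: "H \<subseteq> E \<Longrightarrow> finite {S. is_ncnbc r H S}"
proof -
  assume "H \<subseteq> E"
  then have "finite H" using finE finite_subset by blast
  moreover have "{S. is_ncnbc r H S} \<subseteq> Pow H" by (auto simp: is_ncnbc_def is_nbc_def)
  ultimately show ?thesis using finite_subset by blast
qed

lemma toggle_iff:
  assumes H: "H \<in> NC n E" and e0: "e0 \<in> H" "\<forall>c\<in>H. (e0,c) \<in> r"
  shows "is_ncnbc r H (insert e0 S) \<longleftrightarrow> is_ncnbc r H S"
proof -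
  have HE: "H \<subseteq> E" using NC_sub[OF H] .
  have nb: "e0 \<notin> B" if B: "B \<in> broken_circuits r H" for B
  proof -
    obtain C where C: "C \<in> cycle_sets H" "B = C - {min_edge r C}"
      using B by (auto simp: broken_circuits_def)
    have "C \<subseteq> H" using C(1) by (auto simp: cycle_sets_def)
    show ?thesis
    proof (cases "e0 \<in> C")
      case True
      then have "min_edge r C = e0" using min_edge_eq[of e0 C] e0(2) \<open>C \<subseteq> H\<close> by blast
      then show ?thesis using C(2) by simp
    next
      case False then show ?thesis using C(2) by simp
    qed
  qed
  have nbc: "is_nbc r H (insert e0 S) \<longleftrightarrow> is_nbc r H S"
    unfolding is_nbc_def using nb e0(1) by blast
  have nc0: "\<not> crosses e0 f" "\<not> crosses f e0" if "f \<in> H" for f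
    using min_nocross[OF H e0 that] crosses_sym by auto
  show ?thesis
  proof
    assume "is_ncnbc r H (insert e0 S)"
    then show "is_ncnbc r H S" unfolding is_ncnbc_def using nbc by blast
  next
    assume a: "is_ncnbc r H S"
    then have "S \<subseteq> H" by (simp add: is_ncnbc_def is_nbc_def)
    then show "is_ncnbc r H (insert e0 S)"
      using a nbc nc0 crosses_irrefl unfolding is_ncnbc_def by blast
  qed
qed

lemma alt_sum_zero:
  assumes H: "H \<in> NC n E" and ne: "H \<noteq> {}"
  shows "(\<Sum>S\<in>{S. is_ncnbc r H S}. (-1::int) ^ card S) = 0"
proof -
  have HE: "H \<subseteq> E" using NC_sub[OF H] .
  obtain e0 where e0: "e0 \<in> H" "\<forall>c\<in>H. (e0,c) \<in> r" using r_min_exists[OF HE ne] by blast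
  let ?N = "{S. is_ncnbc r H S}"
  let ?A = "{S \<in> ?N. e0 \<notin> S}" and ?B = "{S \<in> ?N. e0 \<in> S}"
  have fin: "finite ?N" using ncnbc_fin[OF HE] .
  have finH: "finite H" using HE finE finite_subset by blast
  have finS: "S \<in> ?N \<Longrightarrow> finite S" for S
    using finite_subset[OF _ finH] by (auto simp: is_ncnbc_def is_nbc_def)
  have split: "(\<Sum>S\<in>?N. (-1::int) ^ card S) = (\<Sum>S\<in>?A. (-1::int) ^ card S) + (\<Sum>S\<in>?B. (-1::int) ^ card S)"
    using fin by (subst sum.union_disjoint[symmetric]) (auto intro: sum.cong)
  have Bimg: "?B = insert e0 ` ?A"
  proof
    show "?B \<subseteq> insert e0 ` ?A"
    proof
      fix S assume S: "S \<in> ?B"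
      then have eq: "insert e0 (S - {e0}) = S" by auto
      have "is_ncnbc r H S" using S by simp
      then have "is_ncnbc r H (S - {e0})"
        using toggle_iff[OF H e0, of "S - {e0}", unfolded eq] by simp
      moreover have "S = insert e0 (S - {e0})" using eq by simp
      ultimately show "S \<in> insert e0 ` ?A" by blast
    qed
    show "insert e0 ` ?A \<subseteq> ?B" using toggle_iff[OF H e0] by auto
  qed
  have inj: "inj_on (insert e0) ?A"
    by (rule inj_onI) (metis (no_types, lifting) mem_Collect_eq insert_ident)
  have "(\<Sum>S\<in>?B. (-1::int) ^ card S) = (\<Sum>S\<in>?A. (-1::int) ^ card (insert e0 S))"
    unfolding Bimg using sum.reindex[OF inj] by simp
  also have "\<dots> = (\<Sum>S\<in>?A. - ((-1::int) ^ card S))"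
    using finS by (intro sum.cong) auto
  also have "\<dots> = - (\<Sum>S\<in>?A. (-1::int) ^ card S)" by (simp add: sum_negf)
  finally show ?thesis using split by simp
qed

end

lemma nbc_acyclic:
  assumes "is_nbc r X S"
  shows "cycle_sets S = {}"
proof (rule ccontr)
  assume "cycle_sets S \<noteq> {}"
  then obtain C where C: "C \<in> cycle_sets S" by blast
  have SX: "S \<subseteq> X" using assms by (simp add: is_nbc_def)
  have CS: "C \<subseteq> S" using C by (auto simp: cycle_sets_def)
  have "C \<in> cycle_sets X" using C SX by (auto simp: cycle_sets_def)
  then have "C - {min_edge r C} \<in> broken_circuits r X" by (auto simp: broken_circuits_def)
  moreover have "C - {min_edge r C} \<subseteq> S" using CS by auto
  ultimately show False using assms by (auto simp: is_nbc_def)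
qed

lemma cycle_sets_empty: "cycle_sets {} = {}"
proof -
  have False if Cc: "C \<in> cycle_sets {}" for C
  proof -
    obtain vs where vs: "length vs \<ge> 3"
      "C = {mk_edge (vs ! i) (vs ! ((i + 1) mod length vs)) | i. i < length vs}" "C \<subseteq> {}"
      using Cc unfolding cycle_sets_def by blast
    have "0 < length vs" using vs(1) by linarith
    then have "mk_edge (vs ! 0) (vs ! ((0 + 1) mod length vs)) \<in> C" using vs(2) by blast
    then show False using vs(3) by blast
  qed
  then show ?thesis by blast
qed

lemma ncnbc_empty: "ncnbc r {} 0 = 1"
proof -
  have "{S. is_ncnbc r {} S \<and> card S = 0} = {{}}"
    by (auto simp: is_ncnbc_def is_nbc_def broken_circuits_def cycle_sets_empty)
  then show ?thesis by (simp add: ncnbc_def)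
qed

context gr2
begin

definition AK :: "edge set \<Rightarrow> edge set set" where
  "AK K = {S. is_ncnbc r K S \<and> card S = n - cc n K}"

lemma bc_mono: "X \<subseteq> Y \<Longrightarrow> broken_circuits r X \<subseteq> broken_circuits r Y"
  unfolding broken_circuits_def using cycle_sets_mono by blast

lemma F2:
  assumes H: "H \<in> NC n E" and S: "is_ncnbc r H S"
  shows "clo S \<in> NC n E \<and> clo S \<subseteq> H \<and> S \<in> AK (clo S)"
proof -
  have HE: "H \<subseteq> E" using NC_sub[OF H] .
  have SH: "S \<subseteq> H" using S by (simp add: is_ncnbc_def is_nbc_def)
  then have SE: "S \<subseteq> E" using HE by simp
  have nc: "\<forall>e\<in>S. \<forall>f\<in>S. \<not> crosses e f" using S by (simp add: is_ncnbc_def)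
  have acyc: "cycle_sets S = {}" using S nbc_acyclic by (auto simp: is_ncnbc_def)
  have inNC: "clo S \<in> NC n E"
    using clo_bond[OF SE] noncross_blocks[OF SE nc] blocks_clo[OF SE]
    by (simp add: NC_def noncrossing_bond_def)
  have sub: "clo S \<subseteq> H" using clo_sub[OF SH NC_bond[OF H]] .
  have "S \<subseteq> clo S" using S_sub_clo[OF SE] .
  moreover have "broken_circuits r (clo S) \<subseteq> broken_circuits r H" using bc_mono[OF sub] .
  ultimately have "is_ncnbc r (clo S) S" using S by (auto simp: is_ncnbc_def is_nbc_def)
  moreover have "card S = n - cc n (clo S)"
    using forest_count[OF SE acyc] blocks_clo[OF SE] by (simp add: cc_def)
  ultimately show ?thesis using inNC sub by (simp add: AK_def)
qed

lemma F1:
  assumes H: "H \<in> NC n E" and K: "K \<in> NC n E" and KH: "K \<subseteq> H" and S: "S \<in> AK K"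
  shows "is_ncnbc r H S \<and> clo S = K"
proof -
  have HE: "H \<subseteq> E" using NC_sub[OF H] .
  have KE: "K \<subseteq> E" using NC_sub[OF K] .
  have Sn: "is_ncnbc r K S" and cS: "card S = n - cc n K" using S by (auto simp: AK_def)
  have SK: "S \<subseteq> K" using Sn by (simp add: is_ncnbc_def is_nbc_def)
  then have SE: "S \<subseteq> E" using KE by simp
  have acyc: "cycle_sets S = {}" using Sn nbc_acyclic by (auto simp: is_ncnbc_def)
  have fc: "card S + cc n S = n" using forest_count[OF SE acyc] .
  have RSK: "RR S \<subseteq> RR K" using RR_mono[OF SK] .
  have "cc n K \<le> cc n S" using cc_le[OF RSK] .
  then have ccq: "cc n K = cc n S" using fc cS by linarith
  have RKS: "\<And>u w. u \<in> {1..n} \<Longrightarrow> w \<in> {1..n} \<Longrightarrow> (u,w) \<in> RR K \<Longrightarrow> (u,w) \<in> RR S"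
    using cc_eq_RR[OF RSK ccq] by blast
  have cloK: "clo S = K"
  proof -
    have "clo S = clo K"
    proof (unfold clo_def, intro Collect_cong conj_cong refl)
      fix e assume eE: "e \<in> E"
      obtain i j where e: "e = (i,j)" by (cases e)
      have "i \<in> {1..n}" "j \<in> {1..n}" using edgeE[of i j] eE e by auto
      then show "(e \<in> RR S) = (e \<in> RR K)" using RKS RSK e by blast
    qed
    then show ?thesis using clo_bond_eq[OF NC_bond[OF K]] by simp
  qed
  have nbcH: "is_nbc r H S"
    unfolding is_nbc_def
  proof (intro conjI ballI)
    show "S \<subseteq> H" using SK KH by simp
    fix B assume B: "B \<in> broken_circuits r H"
    then obtain C where C: "C \<in> cycle_sets H" "B = C - {min_edge r C}"
      by (auto simp: broken_circuits_def)
    show "\<not> B \<subseteq> S"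
    proof
      assume BS: "B \<subseteq> S"
      obtain vs where vs: "set vs \<noteq> {}" "\<forall>x\<in>set vs. \<forall>y\<in>set vs. (x,y) \<in> RR S"
        "\<forall>e\<in>C. fst e \<in> set vs \<and> snd e \<in> set vs"
        using cycle_minus_conn[OF C(1), of "min_edge r C" S] BS C(2) by blast
      have CH: "C \<subseteq> H" using C(1) by (auto simp: cycle_sets_def)
      have CK: "C \<subseteq> K"
      proof
        fix e assume eC: "e \<in> C"
        obtain i j where e: "e = (i,j)" by (cases e)
        have "(i,j) \<in> RR S" using vs eC e by fastforce
        then have "(i,j) \<in> RR K" using RSK by blast
        moreover have "(i,j) \<in> E" using eC CH HE e by auto
        ultimately show "e \<in> K" using bond_closed[OF NC_bond[OF K]] e by simp
      qed
      then have "C \<in> cycle_sets K" using C(1) by (auto simp: cycle_sets_def)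
      then have "B \<in> broken_circuits r K" using C(2) by (auto simp: broken_circuits_def)
      then show False using Sn BS by (auto simp: is_ncnbc_def is_nbc_def)
    qed
  qed
  show ?thesis using nbcH Sn cloK by (simp add: is_ncnbc_def)
qed

lemma AK_fin: "K \<subseteq> E \<Longrightarrow> finite (AK K)"
proof -
  assume "K \<subseteq> E"
  then have "finite {S. is_ncnbc r K S}" by (rule ncnbc_fin)
  moreover have "AK K \<subseteq> {S. is_ncnbc r K S}" by (auto simp: AK_def)
  ultimately show ?thesis using finite_subset by blast
qed

lemma decomp:
  assumes H: "H \<in> NC n E"
  shows "(\<Sum>K\<in>{K\<in>NC n E. K \<subseteq> H}. \<Sum>S\<in>AK K. g S) = (\<Sum>S\<in>{S. is_ncnbc r H S}. g S)"
proof -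
  let ?I = "{K\<in>NC n E. K \<subseteq> H}"
  have finI: "finite ?I" using finite_NC by simp
  have finA: "\<forall>K\<in>?I. finite (AK K)" using AK_fin NC_sub by blast
  have disj: "\<forall>K\<in>?I. \<forall>K'\<in>?I. K \<noteq> K' \<longrightarrow> AK K \<inter> AK K' = {}"
  proof (intro ballI impI)
    fix K K' assume K: "K \<in> ?I" and K': "K' \<in> ?I" and ne: "K \<noteq> K'"
    show "AK K \<inter> AK K' = {}"
    proof (rule ccontr)
      assume "AK K \<inter> AK K' \<noteq> {}"
      then obtain S where "S \<in> AK K" "S \<in> AK K'" by blast
      then have "clo S = K" "clo S = K'" using F1[OF H] K K' by blast+
      then show False using ne by simp
    qed
  qed
  have U: "\<Union>(AK ` ?I) = {S. is_ncnbc r H S}"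
  proof
    show "\<Union>(AK ` ?I) \<subseteq> {S. is_ncnbc r H S}" using F1[OF H] by blast
    show "{S. is_ncnbc r H S} \<subseteq> \<Union>(AK ` ?I)"
    proof
      fix S assume "S \<in> {S. is_ncnbc r H S}"
      then have "clo S \<in> ?I" "S \<in> AK (clo S)" using F2[OF H] by auto
      then show "S \<in> \<Union>(AK ` ?I)" by blast
    qed
  qed
  show ?thesis using sum.UNION_disjoint[OF finI finA disj, of g] U by simp
qed

definition fval :: "edge set \<Rightarrow> int" where
  "fval K = (-1) ^ (n - cc n K) * int (ncnbc r K (n - cc n K))"

lemma fval_sum: "K \<subseteq> E \<Longrightarrow> fval K = (\<Sum>S\<in>AK K. (-1::int) ^ card S)"
proof -
  assume "K \<subseteq> E"
  have "(\<Sum>S\<in>AK K. (-1::int) ^ card S) = (\<Sum>S\<in>AK K. (-1::int) ^ (n - cc n K))"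
    by (rule sum.cong) (auto simp: AK_def)
  also have "\<dots> = int (card (AK K)) * (-1) ^ (n - cc n K)" by simp
  also have "card (AK K) = ncnbc r K (n - cc n K)" by (simp add: AK_def ncnbc_def)
  finally show ?thesis by (simp add: fval_def)
qed

lemma fval_zero:
  assumes H: "H \<in> NC n E" and ne: "H \<noteq> {}"
  shows "(\<Sum>K\<in>{K\<in>NC n E. K \<subseteq> H}. fval K) = 0"
proof -
  have "(\<Sum>K\<in>{K\<in>NC n E. K \<subseteq> H}. fval K) = (\<Sum>K\<in>{K\<in>NC n E. K \<subseteq> H}. \<Sum>S\<in>AK K. (-1::int) ^ card S)"
    using fval_sum NC_sub by (intro sum.cong) auto
  also have "\<dots> = (\<Sum>S\<in>{S. is_ncnbc r H S}. (-1::int) ^ card S)" by (rule decomp[OF H])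
  also have "\<dots> = 0" by (rule alt_sum_zero[OF H ne])
  finally show ?thesis .
qed

lemma mobius_main:
  assumes "H \<in> NC n E"
  shows "mobius (NC n E) H = fval H"
  using assms
proof (induct "card H" arbitrary: H rule: less_induct)
  case less
  note H = less.prems
  have HE: "H \<subseteq> E" using NC_sub[OF H] .
  have finH: "finite H" using HE finE finite_subset by blast
  show ?case
  proof (cases "H = {}")
    case True
    then show ?thesis by (simp add: fval_def cc_empty ncnbc_empty)
  next
    case False
    have m: "mobius (NC n E) H = - (\<Sum>y\<in>{y\<in>NC n E. y \<subset> H}. mobius (NC n E) y)"
      using False finH by (subst mobius.simps) simp
    have IH: "(\<Sum>y\<in>{y\<in>NC n E. y \<subset> H}. mobius (NC n E) y) = (\<Sum>y\<in>{y\<in>NC n E. y \<subset> H}. fval y)"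
    proof (rule sum.cong[OF refl])
      fix y assume y: "y \<in> {y\<in>NC n E. y \<subset> H}"
      then have "card y < card H" using psubset_card_mono[OF finH] by blast
      then show "mobius (NC n E) y = fval y" using less.hyps y by blast
    qed
    have spl: "{K\<in>NC n E. K \<subseteq> H} = insert H {y\<in>NC n E. y \<subset> H}" using H by auto
    have "0 = (\<Sum>K\<in>{K\<in>NC n E. K \<subseteq> H}. fval K)" using fval_zero[OF H False] by simp
    also have "\<dots> = fval H + (\<Sum>y\<in>{y\<in>NC n E. y \<subset> H}. fval y)"
      unfolding spl using finite_NC by (subst sum.insert) auto
    finally show ?thesis using m IH by simp
  qed
qed

end

lemma noncut:
  assumes fin: "finite B" and u: "u \<in> B" and w0: "w0 \<in> B" "u \<noteq> w0"
    and conn: "connected_on X B"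
  shows "\<exists>v\<in>B. connected_on X (B - {v})"
proof -
  define Q where "Q = adjrel (induced_edges X B)"
  have QB: "(x,y) \<in> Q \<Longrightarrow> x \<in> B \<and> y \<in> B" for x y
    by (auto simp: Q_def adjrel_def induced_edges_def)
  have reach: "\<exists>k. (u,w) \<in> Q ^^ k" if "w \<in> B" for w
  proof -
    have "(u,w) \<in> Q\<^sup>*" using conn u that by (simp add: connected_on_def Q_def)
    then show ?thesis using rtrancl_power by blast
  qed
  define d where "d w = (LEAST k. (u,w) \<in> Q ^^ k)" for w
  have dI: "(u,w) \<in> Q ^^ d w" if "w \<in> B" for w
    using reach[OF that] unfolding d_def by (rule LeastI_ex)
  have dle: "(u,w) \<in> Q ^^ k \<Longrightarrow> d w \<le> k" for w k
    unfolding d_def by (rule Least_le)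
  obtain v where v: "v \<in> B" "\<forall>w\<in>B. d w \<le> d v"
  proof -
    have "d ` B \<noteq> {}" using u by blast
    then have "Max (d ` B) \<in> d ` B" using fin by (intro Max_in) auto
    then obtain v where "v \<in> B" "d v = Max (d ` B)" by auto
    moreover have "\<forall>w\<in>B. d w \<le> Max (d ` B)" using fin by auto
    ultimately show ?thesis using that by auto
  qed
  have dw0: "d w0 > 0"
  proof (rule ccontr)
    assume "\<not> d w0 > 0"
    then have "(u,w0) \<in> Q ^^ 0" using dI[OF w0(1)] by simp
    then show False using w0(2) by simp
  qed
  have vu: "v \<noteq> u"
  proof
    assume "v = u"
    have "(u,u) \<in> Q ^^ 0" by simp
    then have "d u = 0" using dle[of u 0] by simp
    then show False using v w0 dw0 \<open>v = u\<close> by fastforce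
  qed
  let ?Q' = "adjrel (induced_edges X (B - {v}))"
  have claim: "\<forall>w\<in>B. d w = k \<longrightarrow> w \<noteq> v \<longrightarrow> (u,w) \<in> ?Q'\<^sup>*" for k
  proof (induct k)
    case 0
    show ?case
    proof (intro ballI impI)
      fix w assume "w \<in> B" "d w = 0" "w \<noteq> v"
      then have "(u,w) \<in> Q ^^ 0" using dI by force
      then show "(u,w) \<in> ?Q'\<^sup>*" by simp
    qed
  next
    case (Suc k)
    show ?case
    proof (intro ballI impI)
      fix w assume w: "w \<in> B" "d w = Suc k" "w \<noteq> v"
      then have "(u,w) \<in> Q ^^ Suc k" using dI by force
      then obtain w' where w': "(u,w') \<in> Q ^^ k" "(w',w) \<in> Q" by (rule relpow_Suc_E)
      have w'B: "w' \<in> B" using QB[OF w'(2)] by simp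
      have "d w' \<le> k" using dle[OF w'(1)] .
      moreover have "d w \<le> Suc (d w')" using dle relpow_Suc_I[OF dI[OF w'B] w'(2)] by blast
      ultimately have dw': "d w' = k" using w(2) by simp
      have "w' \<noteq> v" using dw' w(2) v(2) w(1) by (metis Suc_n_not_le_n)
      then have IH: "(u,w') \<in> ?Q'\<^sup>*" using Suc w'B dw' by blast
      have "(w',w) \<in> ?Q'"
        using w'(2) w'B w(1,3) \<open>w' \<noteq> v\<close> by (auto simp: Q_def adjrel_def induced_edges_def)
      then show "(u,w) \<in> ?Q'\<^sup>*" using IH by (meson rtrancl.rtrancl_into_rtrancl)
    qed
  qed
  have "connected_on X (B - {v})"
    unfolding connected_on_def
  proof (intro ballI)
    fix x y assume x: "x \<in> B - {v}" and y: "y \<in> B - {v}"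
    have "(u,x) \<in> ?Q'\<^sup>*" "(u,y) \<in> ?Q'\<^sup>*" using claim x y by blast+
    then show "(x,y) \<in> ?Q'\<^sup>*" by (meson RR_sym RR_trans)
  qed
  then show ?thesis using v by blast
qed

context gr
begin

lemma bond_intro:
  assumes "K \<subseteq> E" "\<And>i j. (i,j) \<in> E \<Longrightarrow> (i,j) \<in> RR K \<Longrightarrow> (i,j) \<in> K"
  shows "is_bond n E K"
  unfolding is_bond_def
proof (intro conjI ballI)
  show "K \<subseteq> E" by fact
  fix C assume "C \<in> blocks n K"
  then obtain w where C: "C = RR K `` {w}" by (auto simp: blocks_eq)
  show "induced_edges K C = induced_edges E C"
  proof
    show "induced_edges K C \<subseteq> induced_edges E C" using assms(1) by (auto simp: induced_edges_def)
    show "induced_edges E C \<subseteq> induced_edges K C"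
    proof
      fix e assume "e \<in> induced_edges E C"
      then obtain i j where e: "e = (i,j)" "(i,j) \<in> E" "i \<in> C" "j \<in> C"
        by (auto simp: induced_edges_def)
      then have "(w,i) \<in> RR K" "(w,j) \<in> RR K" using C by auto
      then have "(i,j) \<in> RR K" by (meson RR_sym RR_trans)
      then show "e \<in> induced_edges K C" using assms(2) e by (auto simp: induced_edges_def)
    qed
  qed
qed

lemma cc_le_n: "cc n H \<le> n"
proof -
  have "cc n H \<le> card {1..n}" unfolding cc_def blocks_eq by (rule card_image_le) simp
  then show ?thesis by simp
qed

lemma cc_strict:
  assumes K: "K \<in> NC n E" and z: "z \<in> NC n E" and Kz: "K \<subset> z"
  shows "cc n z < cc n K"
proof -
  have "cc n z \<le> cc n K" using cc_le[OF RR_mono] Kz by blast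
  moreover have "cc n z \<noteq> cc n K"
  proof
    assume "cc n z = cc n K"
    then have "z \<subseteq> K" using cc_eq_sub[of K z] Kz NC_bond[OF K] NC_sub[OF z] by blast
    then show False using Kz by blast
  qed
  ultimately show ?thesis by simp
qed

lemma split_block:
  assumes H: "H \<in> NC n E" and ne: "H \<noteq> {}"
  shows "\<exists>K\<in>NC n E. K \<subset> H \<and> cc n K = cc n H + 1"
proof -
  have HE: "H \<subseteq> E" using NC_sub[OF H] .
  have bH: "is_bond n E H" using NC_bond[OF H] .
  obtain a b where ab: "(a,b) \<in> H" using ne by auto
  have abE: "(a,b) \<in> E" using ab HE by auto
  have aV: "a \<in> {1..n}" and a_b: "a < b" using edgeE[OF abE] by auto
  define B where "B = RR H `` {a}"
  have Bb: "B \<in> blocks n H" using aV by (auto simp: blocks_eq B_def)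
  have aB: "a \<in> B" and bB: "b \<in> B" using edge_RR[OF ab] by (auto simp: B_def)
  have BV: "B \<subseteq> {1..n}" using blocks_sub_V[OF HE Bb] .
  have finB: "finite B" using BV finite_subset by blast
  have Bc: "connected_on E B" using bond_conn_E[OF bH Bb] .
  obtain v where v: "v \<in> B" "connected_on E (B - {v})"
    using noncut[OF finB aB bB _ Bc] a_b by auto
  have av: "(a,v) \<in> RR H" using v(1) by (simp add: B_def)
  define K where "K = {e \<in> H. fst e \<noteq> v \<and> snd e \<noteq> v}"
  have KH: "K \<subseteq> H" by (auto simp: K_def)
  have KE: "K \<subseteq> E" using KH HE by simp
  have vis: "(x,y) \<in> RR K \<Longrightarrow> x = y \<or> (x \<noteq> v \<and> y \<noteq> v)" for x y
  proof (induct rule: rtrancl_induct)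
    case base then show ?case by simp
  next
    case (step y z)
    then have "y \<noteq> v \<and> z \<noteq> v" by (auto simp: adjrel_def K_def)
    then show ?case using step(3) by auto
  qed
  have RKH: "RR K \<subseteq> RR H" using RR_mono[OF KH] .
  have bk: "(x,y) \<in> RR K" if xy: "x \<noteq> v" "y \<noteq> v" "(x,y) \<in> RR H" for x y
  proof (cases "(a,x) \<in> RR H")
    case True
    then have "x \<in> B" "y \<in> B" using xy(3) RR_trans by (auto simp: B_def)
    then have xy': "x \<in> B - {v}" "y \<in> B - {v}" using xy by auto
    then have "(x,y) \<in> RR (induced_edges E (B - {v}))" using v(2) by (auto simp: connected_on_def)
    moreover have "induced_edges E (B - {v}) \<subseteq> K"
    proof
      fix e assume "e \<in> induced_edges E (B - {v})"
      then obtain i j where e: "e = (i,j)" "(i,j) \<in> E" "i \<in> B - {v}" "j \<in> B - {v}"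
        by (auto simp: induced_edges_def)
      then have "(a,i) \<in> RR H" "(a,j) \<in> RR H" by (auto simp: B_def)
      then have "(i,j) \<in> RR H" by (meson RR_sym RR_trans)
      then have "(i,j) \<in> H" using bond_closed[OF bH e(2)] by simp
      then show "e \<in> K" using e by (auto simp: K_def)
    qed
    ultimately show ?thesis using RR_mono by blast
  next
    case False
    define C where "C = RR H `` {x}"
    have "x \<in> C" "y \<in> C" using xy(3) by (auto simp: C_def)
    have vC: "v \<notin> C"
    proof
      assume "v \<in> C"
      then have "(x,v) \<in> RR H" by (simp add: C_def)
      then have "(a,x) \<in> RR H" using av by (meson RR_sym RR_trans)
      then show False using False by simp
    qed
    have "(x,y) \<in> RR (induced_edges H C)"
      using RR_induced[OF xy(3)] by (simp add: C_def)
    moreover have "induced_edges H C \<subseteq> K" using vC by (auto simp: induced_edges_def K_def)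
    ultimately show ?thesis using RR_mono by blast
  qed
  have cls: "RR K `` {w} = (if w = v then {v} else RR H `` {w} - {v})" for w
  proof (cases "w = v")
    case True
    have "RR K `` {w} = {v}" using vis True by auto
    then show ?thesis using True by simp
  next
    case False
    have "RR K `` {w} = RR H `` {w} - {v}"
    proof
      show "RR K `` {w} \<subseteq> RR H `` {w} - {v}" using vis RKH False by blast
      show "RR H `` {w} - {v} \<subseteq> RR K `` {w}" using bk False by blast
    qed
    then show ?thesis using False by simp
  qed
  have clsB: "RR H `` {w} = B" if "w \<in> B" for w
    using that class_eq[of H w a] RR_sym unfolding B_def by auto
  have blK: "blocks n K = insert {v} (insert (B - {v}) (blocks n H - {B}))"
  proof
    show "blocks n K \<subseteq> insert {v} (insert (B - {v}) (blocks n H - {B}))"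
    proof
      fix X assume "X \<in> blocks n K"
      then obtain w where w: "w \<in> {1..n}" "X = RR K `` {w}" by (auto simp: blocks_eq)
      show "X \<in> insert {v} (insert (B - {v}) (blocks n H - {B}))"
      proof (cases "w = v")
        case True then show ?thesis using w cls by simp
      next
        case wv: False
        show ?thesis
        proof (cases "w \<in> B")
          case True
          then show ?thesis using w cls clsB wv by simp
        next
          case False
          have "v \<notin> RR H `` {w}"
          proof
            assume "v \<in> RR H `` {w}"
            then have "RR H `` {w} = RR H `` {v}" using class_eq by (metis Image_singleton_iff)
            then have "w \<in> B" using clsB[OF v(1)] by auto
            then show False using False by simp
          qed
          then have "X = RR H `` {w}" using w cls wv by auto
          moreover have "RR H `` {w} \<in> blocks n H" using w by (auto simp: blocks_eq)
          moreover have "RR H `` {w} \<noteq> B" using False by auto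
          ultimately show ?thesis by simp
        qed
      qed
    qed
    show "insert {v} (insert (B - {v}) (blocks n H - {B})) \<subseteq> blocks n K"
    proof (intro insert_subsetI subsetI)
      have vV: "v \<in> {1..n}" using v(1) BV by auto
      show "{v} \<in> blocks n K" using cls[of v] vV unfolding blocks_eq by force
      obtain y where y: "y \<in> B" "y \<noteq> v" using aB bB a_b by (cases "a = v") auto
      have yV: "y \<in> {1..n}" using y BV by auto
      have "RR K `` {y} = B - {v}" using cls[of y] clsB[OF y(1)] y(2) by simp
      then show "B - {v} \<in> blocks n K" using yV unfolding blocks_eq by force
      fix X assume X: "X \<in> blocks n H - {B}"
      then have "X \<in> (\<lambda>v. RR H `` {v}) ` {1..n}" by (simp add: blocks_eq)
      then obtain w where w: "w \<in> {1..n}" "X = RR H `` {w}" by blast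
      have wB: "w \<notin> B" using X w clsB by auto
      then have wv: "w \<noteq> v" using v(1) by auto
      have "v \<notin> X"
      proof
        assume "v \<in> X"
        then have "(w,v) \<in> RR H" using w by simp
        then have "(a,w) \<in> RR H" using av by (meson RR_sym RR_trans)
        then show False using wB by (simp add: B_def)
      qed
      then have "RR K `` {w} = X" using cls[of w] wv w by auto
      then show "X \<in> blocks n K" using w(1) unfolding blocks_eq by force
    qed
  qed
  have n1: "{v} \<notin> insert (B - {v}) (blocks n H - {B})"
  proof
    assume "{v} \<in> insert (B - {v}) (blocks n H - {B})"
    moreover have "{v} \<noteq> B - {v}" by auto
    ultimately have "{v} \<in> blocks n H" "{v} \<noteq> B" by auto
    then obtain z where z: "{v} = RR H `` {z}" by (auto simp: blocks_eq)
    then have "(z,v) \<in> RR H" by (metis Image_singleton_iff singletonI)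
    then have "RR H `` {z} = RR H `` {v}" using class_eq by metis
    then show False using z clsB[OF v(1)] \<open>{v} \<noteq> B\<close> by simp
  qed
  have n2: "B - {v} \<notin> blocks n H - {B}"
  proof
    assume a1: "B - {v} \<in> blocks n H - {B}"
    obtain y where y: "y \<in> B" "y \<noteq> v" using aB bB a_b by (cases "a = v") auto
    obtain z where z: "B - {v} = RR H `` {z}" using a1 by (auto simp: blocks_eq)
    then have "(z,y) \<in> RR H" using y by auto
    then have "RR H `` {z} = RR H `` {y}" using class_eq by metis
    then have "B - {v} = B" using z clsB[OF y(1)] by simp
    then show False using v(1) by auto
  qed
  have ccK: "cc n K = cc n H + 1"
  proof -
    have "cc n K = card (blocks n H - {B}) + 2"
      unfolding cc_def blK using n1 n2 finite_blocks by simp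
    moreover have "card (blocks n H - {B}) + 1 = card (blocks n H)"
      using Bb finite_blocks by (simp add: card_Diff_singleton_if)
      (metis Suc_pred card_gt_0_iff empty_iff)
    ultimately show ?thesis unfolding cc_def by simp
  qed
  have bK: "is_bond n E K"
  proof (rule bond_intro[OF KE])
    fix i j assume ij: "(i,j) \<in> E" "(i,j) \<in> RR K"
    have "i < j" using edgeE[OF ij(1)] by simp
    then have "i \<noteq> v" "j \<noteq> v" using vis[OF ij(2)] by auto
    moreover have "(i,j) \<in> H" using bond_closed[OF bH ij(1)] RKH ij(2) by blast
    ultimately show "(i,j) \<in> K" by (simp add: K_def)
  qed
  have ncK: "\<not> crossing_partition (blocks n K)"
  proof
    assume "crossing_partition (blocks n K)"
    then obtain e f where ef: "e \<in> K" "f \<in> K" "crosses e f" "(fst e, fst f) \<notin> RR K"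
      using crossing_edges[OF KE] by blast
    have efH: "e \<in> H" "f \<in> H" using ef KH by auto
    show False
    proof (cases "(fst e, fst f) \<in> RR H")
      case True
      have "fst e \<noteq> v" "fst f \<noteq> v" using ef(1,2) by (auto simp: K_def)
      then have "(fst e, fst f) \<in> RR K" using bk True by blast
      then show False using ef(4) by simp
    next
      case False
      then show False using cross_edges_partition[OF HE efH ef(3)] NC_nc[OF H] by blast
    qed
  qed
  have KNC: "K \<in> NC n E" using bK ncK by (simp add: NC_def noncrossing_bond_def)
  have "K \<noteq> H" using ccK by auto
  then show ?thesis using KNC KH ccK by blast
qed

end

context gr2
begin

lemma rho_eq:
  assumes g: "graded_rank (NC n E) rho rk" and H: "H \<in> NC n E"
  shows "rho H = n - cc n H"
  using H
proof (induct "card H" arbitrary: H rule: less_induct)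
  case less
  note H = less.prems
  show ?case
  proof (cases "H = {}")
    case True
    have "rho {} = 0" using g by (simp add: graded_rank_def)
    then show ?thesis using True by (simp add: cc_empty)
  next
    case False
    obtain K where K: "K \<in> NC n E" "K \<subset> H" "cc n K = cc n H + 1"
      using split_block[OF H False] by blast
    have finH: "finite H" using NC_sub[OF H] finE finite_subset by blast
    have "card K < card H" using psubset_card_mono[OF finH K(2)] .
    then have rK: "rho K = n - cc n K" using less.hyps K(1) by blast
    have cov: "covers (NC n E) K H"
      unfolding covers_def
    proof (intro conjI)
      show "K \<in> NC n E" "H \<in> NC n E" "K \<subset> H" using K H by auto
      show "\<not> (\<exists>z\<in>NC n E. K \<subset> z \<and> z \<subset> H)"
      proof
        assume "\<exists>z\<in>NC n E. K \<subset> z \<and> z \<subset> H"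
        then obtain z where z: "z \<in> NC n E" "K \<subset> z" "z \<subset> H" by blast
        have "cc n z < cc n K" using cc_strict[OF K(1) z(1) z(2)] .
        moreover have "cc n H < cc n z" using cc_strict[OF z(1) H z(3)] .
        ultimately show False using K(3) by simp
      qed
    qed
    then have "rho H = rho K + 1" using g by (simp add: graded_rank_def)
    moreover have "cc n K \<le> n" by (rule cc_le_n)
    ultimately show ?thesis using rK K(3) by simp
  qed
qed

end

context gr2
begin

lemma NS_card_le:
  assumes S: "is_ncnbc r E S"
  shows "card S \<le> n - cc n E"
proof -
  have Ein: "E \<in> NC n E" using E_NC[OF cclosed] .
  have "clo S \<in> NC n E" "S \<in> AK (clo S)" using F2[OF Ein S] by auto
  then have cS: "card S = n - cc n (clo S)" by (simp add: AK_def)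
  have "RR (clo S) \<subseteq> RR E" using RR_mono[OF clo_sub_E] .
  then have "cc n E \<le> cc n (clo S)" by (rule cc_le)
  then show ?thesis using cS by simp
qed

lemma part2:
  assumes g: "graded_rank (NC n E) rho rk"
  shows "char_poly (NC n E) rho rk t =
     (\<Sum>k\<in>{0..card E}. (-1) ^ k * real (ncnbc r E k) * t powi (int rk - int k))"
proof -
  have Ein: "E \<in> NC n E" using E_NC[OF cclosed] .
  have "rho E = rk"
  proof -
    have "\<not> (\<exists>y\<in>NC n E. E \<subset> y)" using NC_sub by blast
    moreover have "\<forall>x\<in>NC n E. (\<not> (\<exists>y\<in>NC n E. x \<subset> y)) \<longrightarrow> rho x = rk"
      using g unfolding graded_rank_def by (elim conjE)
    ultimately show ?thesis using Ein by blast
  qed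
  then have rk: "rk = n - cc n E" using rho_eq[OF g Ein] by simp
  let ?NS = "{S. is_ncnbc r E S}"
  define gg where "gg S = (-1::real) ^ card S * t ^ (rk - card S)" for S :: "edge set"
  have L: "char_poly (NC n E) rho rk t = (\<Sum>S\<in>?NS. gg S)"
  proof -
    have "char_poly (NC n E) rho rk t = (\<Sum>x\<in>NC n E. \<Sum>S\<in>AK x. gg S)"
      unfolding char_poly_def
    proof (rule sum.cong[OF refl])
      fix x assume x: "x \<in> NC n E"
      have xE: "x \<subseteq> E" using NC_sub[OF x] .
      have "of_int (mobius (NC n E) x) = (\<Sum>S\<in>AK x. (-1::real) ^ card S)"
        using mobius_main[OF x] fval_sum[OF xE] by simp
      moreover have "rho x = n - cc n x" using rho_eq[OF g x] .
      ultimately have "of_int (mobius (NC n E) x) * t ^ (rk - rho x)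
          = (\<Sum>S\<in>AK x. (-1::real) ^ card S * t ^ (rk - (n - cc n x)))"
        by (simp add: sum_distrib_right)
      also have "\<dots> = (\<Sum>S\<in>AK x. gg S)"
        by (rule sum.cong) (auto simp: AK_def gg_def)
      finally show "of_int (mobius (NC n E) x) * t ^ (rk - rho x) = (\<Sum>S\<in>AK x. gg S)" .
    qed
    also have "NC n E = {K \<in> NC n E. K \<subseteq> E}" using NC_sub by blast
    then have "(\<Sum>x\<in>NC n E. \<Sum>S\<in>AK x. gg S) = (\<Sum>x\<in>{K \<in> NC n E. K \<subseteq> E}. \<Sum>S\<in>AK x. gg S)"
      by simp
    also have "\<dots> = (\<Sum>S\<in>?NS. gg S)" by (rule decomp[OF Ein])
    finally show ?thesis .
  qed
  have finNS: "finite ?NS" using ncnbc_fin by simp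
  have R: "(\<Sum>k\<in>{0..card E}. (-1) ^ k * real (ncnbc r E k) * t powi (int rk - int k))
      = (\<Sum>S\<in>?NS. (-1::real) ^ card S * t powi (int rk - int (card S)))"
  proof -
    have img: "card ` ?NS \<subseteq> {0..card E}"
    proof
      fix k assume "k \<in> card ` ?NS"
      then obtain S where S: "is_ncnbc r E S" "k = card S" by auto
      then have "S \<subseteq> E" by (simp add: is_ncnbc_def is_nbc_def)
      then have "card S \<le> card E" using card_mono[OF finE] by blast
      then show "k \<in> {0..card E}" using S by simp
    qed
    define hh where "hh S = (-1::real) ^ card S * t powi (int rk - int (card S))" for S :: "edge set"
    have grp: "(\<Sum>k\<in>{0..card E}. \<Sum>S\<in>{S \<in> ?NS. card S = k}. hh S) = (\<Sum>S\<in>?NS. hh S)"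
      by (rule sum.group[OF finNS finite_atLeastAtMost img])
    have "(\<Sum>S\<in>?NS. (-1::real) ^ card S * t powi (int rk - int (card S)))
        = (\<Sum>k\<in>{0..card E}. \<Sum>S\<in>{S \<in> ?NS. card S = k}. (-1::real) ^ card S * t powi (int rk - int (card S)))"
      using grp unfolding hh_def by simp
    also have "\<dots> = (\<Sum>k\<in>{0..card E}. (-1) ^ k * real (ncnbc r E k) * t powi (int rk - int k))"
    proof (rule sum.cong[OF refl])
      fix k
      have "(\<Sum>S\<in>{S \<in> ?NS. card S = k}. (-1::real) ^ card S * t powi (int rk - int (card S)))
          = (\<Sum>S\<in>{S \<in> ?NS. card S = k}. (-1::real) ^ k * t powi (int rk - int k))"
        by (rule sum.cong) auto
      also have "\<dots> = real (card {S \<in> ?NS. card S = k}) * ((-1::real) ^ k * t powi (int rk - int k))"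
        by simp
      also have "card {S \<in> ?NS. card S = k} = ncnbc r E k" by (simp add: ncnbc_def)
      finally show "(\<Sum>S\<in>{S \<in> ?NS. card S = k}. (-1::real) ^ card S * t powi (int rk - int (card S)))
          = (-1) ^ k * real (ncnbc r E k) * t powi (int rk - int k)" by simp
    qed
    finally show ?thesis by simp
  qed
  have "(\<Sum>S\<in>?NS. (-1::real) ^ card S * t powi (int rk - int (card S))) = (\<Sum>S\<in>?NS. gg S)"
  proof (rule sum.cong[OF refl])
    fix S assume S: "S \<in> ?NS"
    have "card S \<le> n - cc n E" using NS_card_le S by blast
    then have cS: "card S \<le> rk" using rk by simp
    have eq: "int rk - int (card S) = int (rk - card S)" using cS by (simp add: of_nat_diff)
    have "t powi (int rk - int (card S)) = t powi (int (rk - card S))" by (simp only: eq)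
    also have "\<dots> = t ^ (rk - card S)" by (rule power_int_of_nat)
    finally show "(-1::real) ^ card S * t powi (int rk - int (card S)) = gg S"
      by (simp only: gg_def)
  qed
  then show ?thesis using L R by simp
qed

end

theorem theorem3p5:
  fixes n :: nat and E :: "edge set" and r :: "(edge \<times> edge) set"
  assumes "graph_on n E"
    and "linear_order_on E r"
    and "upper_crossing_closed n E r"
  shows "(\<forall>H\<in>NC n E. mobius (NC n E) H = (-1) ^ (n - cc n H) * int (ncnbc r H (n - cc n H)))
       \<and> (\<forall>rho rk. graded_rank (NC n E) rho rk \<longrightarrow>
            (\<forall>t::real. char_poly (NC n E) rho rk t =
               (\<Sum>k\<in>{0..card E}. (-1) ^ k * real (ncnbc r E k) * t powi (int rk - int k))))"
proof -
  interpret G: gr2 n E r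
    using assms by (simp add: gr2_def gr2_axioms_def gr_def)
  show ?thesis
    using G.mobius_main G.part2 by (simp add: G.fval_def)
qed


end
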